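(* Let $\alpha=\alpha(s)$ be a unit speed semi-real spatial quaternionic curve in $\mathbb{R}^3_1$. Then: (i) $\alpha$ is a semi-real spatial quaternionic rectifying curve with a spacelike rectifying plane if and only if, up to parametrization, $\alpha(t)=y(t)\frac{a}{\cos t}$ with $a>0$, where $y(t)$ is a unit speed spatial spacelike quaternionic curve lying in the pseudosphere $S^2_1(1)$; (ii) $\alpha$ is a semi-real spatial spacelike (timelike) quaternionic rectifying curve with a timelike rectifying plane and a spacelike (timelike) position vector if and only if, up to parametrization, $\alpha(t)=y(t)\frac{a}{\sinh t}$ with $a>0$, where $y(t)$ is a unit speed spatial timelike (spacelike) quaternionic curve lying in the pseudosphere $S^2_1(1)$ (pseudohyperbolic space $H^2_0(1)$); (iii) $\alpha$ is a semi-real spatial spacelike (timelike) quaternionic rectifying curve with a timelike rectifying plane and a timelike (spacelike) position vector if and only if, up to parametrization, $\alpha(t)=y(t)\frac{a}{\cosh t}$ with $a>0$, where $y(t)$ is a unit speed spatial spacelike (timelike) quaternionic curve lying in the pseudohyperbolic space $H^2_0(1)$ (pseudosphere $S^2_1(1)$).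
   Context: $\mathbb{R}^3_1$ is the semi-Euclidean (Minkowski) 3-space, identified with the semi-real spatial quaternions $q=q_1\mathbf{e}_1+q_2\mathbf{e}_2+q_3\mathbf{e}_3$, with inner product $h(p,q)=p_1q_1+p_2q_2-p_3q_3$ and norm $N(q)=\sqrt{|h(q,q)|}$. A vector $v$ is spacelike if $h(v,v)>0$ (or $v=0$) and timelike if $h(v,v)<0$; a curve is spacelike/timelike if its tangent is. The pseudosphere is $S^2_1(1)=\{x\in\mathbb{R}^3_1: h(x,x)=1\}$ and the pseudohyperbolic space is $H^2_0(1)=\{x\in\mathbb{R}^3_1: h(x,x)=-1\}$. For a unit speed curve with non-null Frenet frame $\{\mathbf{t},\mathbf{n}_1,\mathbf{n}_2\}$ (tangent, principal normal, binormal), the rectifying plane is the plane spanned by $\mathbf{t}$ and $\mathbf{n}_2$, and $\alpha$ is a rectifying curve if $\alpha(s)=\lambda(s)\mathbf{t}(s)+\mu(s)\mathbf{n}_2(s)$ for some differentiable functions $\lambda,\mu$. *)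

theory Defs
  imports "HOL-Analysis.Analysis"
begin

text \<open>Semi-Euclidean space R^3_1, identified with semi-real spatial quaternions
  q = q1 e1 + q2 e2 + q3 e3, represented by their coordinate vectors in real^3.\<close>

definition mink :: "real^3 \<Rightarrow> real^3 \<Rightarrow> real" where
  "mink p q = p$1 * q$1 + p$2 * q$2 - p$3 * q$3"

definition pseudosphere :: "(real^3) set" where
  "pseudosphere = {x. mink x x = 1}"

definition pseudohyperbolic :: "(real^3) set" where
  "pseudohyperbolic = {x. mink x x = -1}"

definition open_interval :: "real set \<Rightarrow> bool" where
  "open_interval I \<longleftrightarrow> open I \<and> is_interval I \<and> I \<noteq> {}"

definition vel :: "(real \<Rightarrow> real^3) \<Rightarrow> real \<Rightarrow> real^3" where
  "vel c t = vector_derivative c (at t)"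

definition unit_speed :: "(real \<Rightarrow> real^3) \<Rightarrow> real set \<Rightarrow> bool" where
  "unit_speed c I \<longleftrightarrow> (\<forall>t\<in>I. c differentiable (at t) \<and> \<bar>mink (vel c t) (vel c t)\<bar> = 1)"

definition spacelike_curve :: "(real \<Rightarrow> real^3) \<Rightarrow> real set \<Rightarrow> bool" where
  "spacelike_curve c I \<longleftrightarrow> (\<forall>t\<in>I. c differentiable (at t) \<and> mink (vel c t) (vel c t) > 0)"

definition timelike_curve :: "(real \<Rightarrow> real^3) \<Rightarrow> real set \<Rightarrow> bool" where
  "timelike_curve c I \<longleftrightarrow> (\<forall>t\<in>I. c differentiable (at t) \<and> mink (vel c t) (vel c t) < 0)"

definition nonnull_frenet_frame ::
  "(real \<Rightarrow> real^3) \<Rightarrow> real set \<Rightarrow> (real \<Rightarrow> real^3) \<Rightarrow> (real \<Rightarrow> real^3) \<Rightarrow> (real \<Rightarrow> real^3) \<Rightarrow> bool" where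
  "nonnull_frenet_frame c I T N1 N2 \<longleftrightarrow>
     (\<exists>\<kappa>. \<forall>s\<in>I.
        (c has_vector_derivative T s) (at s) \<and>
        (T has_vector_derivative (\<kappa> s *\<^sub>R N1 s)) (at s) \<and> \<kappa> s > 0 \<and>
        N1 differentiable (at s) \<and> N2 differentiable (at s) \<and>
        \<bar>mink (T s) (T s)\<bar> = 1 \<and> \<bar>mink (N1 s) (N1 s)\<bar> = 1 \<and> \<bar>mink (N2 s) (N2 s)\<bar> = 1 \<and>
        mink (T s) (N1 s) = 0 \<and> mink (T s) (N2 s) = 0 \<and> mink (N1 s) (N2 s) = 0)"

definition rectifying_curve ::
  "(real \<Rightarrow> real^3) \<Rightarrow> real set \<Rightarrow> (real \<Rightarrow> real^3) \<Rightarrow> (real \<Rightarrow> real^3) \<Rightarrow> bool" where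
  "rectifying_curve c I T N2 \<longleftrightarrow>
     (\<exists>lam mu :: real \<Rightarrow> real. \<forall>s\<in>I. lam differentiable (at s) \<and> mu differentiable (at s) \<and>
                 c s = lam s *\<^sub>R T s + mu s *\<^sub>R N2 s)"

text \<open>Causal character of the plane spanned by u, v (via the Gram matrix of the
  induced metric): spacelike = positive definite, timelike = Lorentzian.\<close>
definition spacelike_plane :: "real^3 \<Rightarrow> real^3 \<Rightarrow> bool" where
  "spacelike_plane u v \<longleftrightarrow> mink u u > 0 \<and> mink u u * mink v v - (mink u v)^2 > 0"

definition timelike_plane :: "real^3 \<Rightarrow> real^3 \<Rightarrow> bool" where
  "timelike_plane u v \<longleftrightarrow> mink u u * mink v v - (mink u v)^2 < 0"

definition reparam :: "(real \<Rightarrow> real) \<Rightarrow> real set \<Rightarrow> real set \<Rightarrow> bool" where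
  "reparam \<phi> J I \<longleftrightarrow> open_interval J \<and> bij_betw \<phi> J I \<and>
     (\<forall>t\<in>J. \<exists>d. (\<phi> has_real_derivative d) (at t) \<and> d \<noteq> 0)"

definition unit_speed_spacelike :: "(real \<Rightarrow> real^3) \<Rightarrow> real set \<Rightarrow> bool" where
  "unit_speed_spacelike y J \<longleftrightarrow> (\<forall>t\<in>J. y differentiable (at t) \<and> mink (vel y t) (vel y t) = 1)"

definition unit_speed_timelike :: "(real \<Rightarrow> real^3) \<Rightarrow> real set \<Rightarrow> bool" where
  "unit_speed_timelike y J \<longleftrightarrow> (\<forall>t\<in>J. y differentiable (at t) \<and> mink (vel y t) (vel y t) = -1)"

end

theory Submission
  imports Defs
begin


lemma mink_sym: "mink p q = mink q p" by (simp add: mink_def algebra_simps)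
lemma mink_add_left: "mink (p + q) r = mink p r + mink q r" by (simp add: mink_def algebra_simps)
lemma mink_add_right: "mink r (p + q) = mink r p + mink r q" by (simp add: mink_def algebra_simps)
lemma mink_diff_left: "mink (p - q) r = mink p r - mink q r" by (simp add: mink_def algebra_simps)
lemma mink_diff_right: "mink r (p - q) = mink r p - mink r q" by (simp add: mink_def algebra_simps)
lemma mink_scale_left: "mink (c *\<^sub>R p) r = c * mink p r" by (simp add: mink_def algebra_simps)
lemma mink_scale_right: "mink r (c *\<^sub>R p) = c * mink r p" by (simp add: mink_def algebra_simps)
lemma mink_zero_left[simp]: "mink 0 r = 0" by (simp add: mink_def)
lemma mink_zero_right[simp]: "mink r 0 = 0" by (simp add: mink_def)
lemmas mink_simps = mink_add_left mink_add_right mink_diff_left mink_diff_right mink_scale_left mink_scale_right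

lemma bb_mink: "bounded_bilinear mink"
proof
  show "\<exists>K. \<forall>a b. norm (mink a b) \<le> norm a * norm b * K"
  proof (intro exI allI)
    fix a b :: "real^3"
    have c: "\<And>i. \<bar>a$i\<bar> \<le> norm a" "\<And>i. \<bar>b$i\<bar> \<le> norm b" by (auto simp: component_le_norm_cart)
    have "\<bar>mink a b\<bar> \<le> \<bar>a$1\<bar>*\<bar>b$1\<bar> + \<bar>a$2\<bar>*\<bar>b$2\<bar> + \<bar>a$3\<bar>*\<bar>b$3\<bar>"
      unfolding mink_def by (simp add: abs_mult[symmetric]) 
    also have "\<dots> \<le> norm a * norm b + norm a * norm b + norm a * norm b"
      by (intro add_mono mult_mono c) auto
    finally show "norm (mink a b) \<le> norm a * norm b * 3" by simp
  qed
qed (auto simp: mink_simps)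

lemma mink_deriv:
  assumes "(f has_vector_derivative f') (at x)" "(g has_vector_derivative g') (at x)"
  shows "((\<lambda>x. mink (f x) (g x)) has_real_derivative (mink (f x) g' + mink f' (g x))) (at x)"
  using bounded_bilinear.has_vector_derivative[OF bb_mink assms]
  by (simp add: has_real_derivative_iff_has_vector_derivative)



lemma orth_zero:
  fixes T N B w :: "real^3"
  assumes "\<bar>mink T T\<bar> = 1" "\<bar>mink N N\<bar> = 1" "\<bar>mink B B\<bar> = 1"
    "mink T N = 0" "mink T B = 0" "mink N B = 0"
    "mink w T = 0" "mink w N = 0" "mink w B = 0"
  shows "w = 0"
proof -
  define Dt where "Dt = T$1*(N$2*B$3 - N$3*B$2) - T$2*(N$1*B$3 - N$3*B$1) + T$3*(N$1*B$2 - N$2*B$1)"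
  have g: "Dt*Dt = - (mink T T * mink N N * mink B B + 2 * mink T N * mink N B * mink T B
     - mink T T * (mink N B)^2 - mink N N * (mink T B)^2 - mink B B * (mink T N)^2)"
    unfolding Dt_def mink_def by algebra
  have "Dt \<noteq> 0"
  proof
    assume "Dt = 0"
    with g assms(4-6) have "mink T T * mink N N * mink B B = 0" by simp
    with assms(1-3) show False by auto
  qed
  have "Dt * w$1 = 0" "Dt * w$2 = 0" "Dt * w$3 = 0"
    using assms(7-9) unfolding Dt_def mink_def by algebra+
  with \<open>Dt \<noteq> 0\<close> show ?thesis by (simp add: vec_eq_iff forall_3)
qed

lemma frame_decomp:
  fixes T N B v :: "real^3"
  assumes "\<bar>mink T T\<bar> = 1" "\<bar>mink N N\<bar> = 1" "\<bar>mink B B\<bar> = 1"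
    "mink T N = 0" "mink T B = 0" "mink N B = 0"
  shows "v = (mink T T * mink v T) *\<^sub>R T + (mink N N * mink v N) *\<^sub>R N + (mink B B * mink v B) *\<^sub>R B"
proof -
  let ?w = "v - ((mink T T * mink v T) *\<^sub>R T + (mink N N * mink v N) *\<^sub>R N + (mink B B * mink v B) *\<^sub>R B)"
  have sq: "mink T T * mink T T = 1" "mink N N * mink N N = 1" "mink B B * mink B B = 1"
    using assms(1-3) by (auto simp: abs_if split: if_splits)
  have s: "mink N T = 0" "mink B T = 0" "mink B N = 0" using assms(4-6) by (auto simp: mink_sym)
  have "mink ?w T = 0" "mink ?w N = 0" "mink ?w B = 0"
    by (simp_all add: mink_simps assms(4-6) s, (simp add: algebra_simps sq)+)
  from orth_zero[OF assms this] show ?thesis by simp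
qed



lemma deriv_sign_pair:
  fixes f :: "real \<Rightarrow> real"
  assumes J: "is_interval J" and inj: "inj_on f J"
    and der: "\<And>t. t \<in> J \<Longrightarrow> (f has_real_derivative d t) (at t) \<and> d t \<noteq> 0"
    and ab: "a \<in> J" "b \<in> J" "a < b"
  shows "d a > 0 \<longleftrightarrow> d b > 0"
proof -
  have sub: "{a..b} \<subseteq> J"
  proof
    fix x assume "x \<in> {a..b}"
    then show "x \<in> J" using mem_is_interval_1_I[OF J ab(1) ab(2)] by auto
  qed
  have cont: "continuous_on {a..b} f"
  proof (intro continuous_at_imp_continuous_on ballI)
    fix x assume "x \<in> {a..b}"
    then have "x \<in> J" using sub by auto
    then show "isCont f x" using der[of x] DERIV_isCont by blast
  qed
  have injab: "inj_on f {a..b}" using inj sub by (rule inj_on_subset)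
  have mono: "\<And>x. a < x \<Longrightarrow> x < b \<Longrightarrow> (f a < f x \<and> f x < f b) \<or> (f b < f x \<and> f x < f a)"
    using continuous_inj_imp_mono[OF _ _ cont injab] by blast
  have mid: "a < (a+b)/2" "(a+b)/2 < b" using ab by auto
  have da: "DERIV f a :> d a" "d a \<noteq> 0" using der[OF ab(1)] by auto
  have db: "DERIV f b :> d b" "d b \<noteq> 0" using der[OF ab(2)] by auto
  show ?thesis
  proof (cases "f a < f b")
    case True
    then have inc: "\<And>x. a < x \<Longrightarrow> x < b \<Longrightarrow> f a < f x \<and> f x < f b"
      using mono True by (meson less_trans not_less_iff_gr_or_eq)
    have "d a > 0"
    proof (rule ccontr)
      assume "\<not> d a > 0" then have "d a < 0" using da by auto
      from DERIV_neg_dec_right[OF da(1) this] obtain e where e: "e > 0" "\<And>h. h > 0 \<Longrightarrow> h < e \<Longrightarrow> f a > f (a + h)" by blast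
      define h where "h = min e (b - a) / 2"
      have h: "h > 0" "h < e" "a + h < b" using e ab unfolding h_def by (auto simp: min_def field_simps)
      have "f a > f (a + h)" using e(2)[OF h(1) h(2)] .
      moreover have "f a < f (a + h)" using inc[of "a+h"] h by auto
      ultimately show False by linarith
    qed
    moreover have "d b > 0"
    proof (rule ccontr)
      assume "\<not> d b > 0" then have "d b < 0" using db by auto
      from DERIV_neg_dec_left[OF db(1) this] obtain e where e: "e > 0" "\<And>h. h > 0 \<Longrightarrow> h < e \<Longrightarrow> f b < f (b - h)" by blast
      define h where "h = min e (b - a) / 2"
      have h: "h > 0" "h < e" "a < b - h" using e ab unfolding h_def by (auto simp: min_def field_simps)
      have "f b < f (b - h)" using e(2)[OF h(1) h(2)] .
      moreover have "f (b - h) < f b" using inc[of "b-h"] h by auto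
      ultimately show False by linarith
    qed
    ultimately show ?thesis by simp
  next
    case False
    then have "f b < f a" proof -
      have "f a \<noteq> f b" using inj_onD[OF inj _ ab(1) ab(2)] ab(3) by auto
      with False show ?thesis by linarith
    qed
    then have dec: "\<And>x. a < x \<Longrightarrow> x < b \<Longrightarrow> f b < f x \<and> f x < f a"
      using mono by (meson less_trans not_less_iff_gr_or_eq)
    have "d a < 0"
    proof (rule ccontr)
      assume "\<not> d a < 0" then have "d a > 0" using da by auto
      from DERIV_pos_inc_right[OF da(1) this] obtain e where e: "e > 0" "\<And>h. h > 0 \<Longrightarrow> h < e \<Longrightarrow> f a < f (a + h)" by blast
      define h where "h = min e (b - a) / 2"
      have h: "h > 0" "h < e" "a + h < b" using e ab unfolding h_def by (auto simp: min_def field_simps)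
      have "f a < f (a + h)" using e(2)[OF h(1) h(2)] .
      moreover have "f a > f (a + h)" using dec[of "a+h"] h by auto
      ultimately show False by linarith
    qed
    moreover have "d b < 0"
    proof (rule ccontr)
      assume "\<not> d b < 0" then have "d b > 0" using db by auto
      from DERIV_pos_inc_left[OF db(1) this] obtain e where e: "e > 0" "\<And>h. h > 0 \<Longrightarrow> h < e \<Longrightarrow> f (b - h) < f b" by blast
      define h where "h = min e (b - a) / 2"
      have h: "h > 0" "h < e" "a < b - h" using e ab unfolding h_def by (auto simp: min_def field_simps)
      have "f (b - h) < f b" using e(2)[OF h(1) h(2)] .
      moreover have "f (b - h) > f b" using dec[of "b-h"] h by auto
      ultimately show False by linarith
    qed
    ultimately show ?thesis by simp
  qed
qed

lemma deriv_sign_const: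
  fixes f :: "real \<Rightarrow> real"
  assumes J: "is_interval J" and inj: "inj_on f J"
    and der: "\<And>t. t \<in> J \<Longrightarrow> (f has_real_derivative d t) (at t) \<and> d t \<noteq> 0"
  shows "(\<forall>t\<in>J. d t > 0) \<or> (\<forall>t\<in>J. d t < 0)"
proof (rule ccontr)
  assume "\<not> ?thesis"
  then obtain a b where ab: "a \<in> J" "b \<in> J" "\<not> d a > 0" "\<not> d b < 0" by auto
  then have n: "d a < 0" "d b > 0" using der by (auto simp: neq_iff)
  then have "a \<noteq> b" by auto
  then consider "a < b" | "b < a" by linarith
  then show False
  proof cases
    case 1 show False using deriv_sign_pair[OF J inj der ab(1) ab(2) 1] n by linarith
  next
    case 2 show False using deriv_sign_pair[OF J inj der ab(2) ab(1) 2] n by linarith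
  qed
qed



definition frm where
 "frm c I T N1 N2 \<kappa> \<longleftrightarrow> (\<forall>s\<in>I.
        (c has_vector_derivative T s) (at s) \<and>
        (T has_vector_derivative (\<kappa> s *\<^sub>R N1 s)) (at s) \<and> \<kappa> s > 0 \<and>
        N1 differentiable (at s) \<and> N2 differentiable (at s) \<and>
        \<bar>mink (T s) (T s)\<bar> = 1 \<and> \<bar>mink (N1 s) (N1 s)\<bar> = 1 \<and> \<bar>mink (N2 s) (N2 s)\<bar> = 1 \<and>
        mink (T s) (N1 s) = 0 \<and> mink (T s) (N2 s) = 0 \<and> mink (N1 s) (N2 s) = 0)"

lemma open_interval_two:
  assumes "open_interval I" obtains s1 s2 where "s1 \<in> I" "s2 \<in> I" "s1 \<noteq> s2"
proof -
  from assms obtain s where s: "s \<in> I" and o: "open I" unfolding open_interval_def by auto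
  then obtain e where e: "e > 0" "ball s e \<subseteq> I" using openE by blast
  then have "s + e/2 \<in> I" by (auto simp: dist_real_def subset_iff)
  with s e show ?thesis using that[of s "s + e/2"] by auto
qed

lemma fwd_core:
  assumes I: "open_interval I" and F: "frm \<alpha> I T N1 N2 \<kappa>"
    and R: "\<forall>s\<in>I. \<alpha> s = lam s *\<^sub>R T s + mu s *\<^sub>R N2 s"
    and eT: "\<forall>s\<in>I. mink (T s) (T s) = e" and fN: "\<forall>s\<in>I. mink (N2 s) (N2 s) = f"
    and e: "e * e = 1" and f: "f * f = 1"
  shows "\<exists>c K. K * f > 0 \<and> (\<forall>s\<in>I. mink (\<alpha> s) (T s) = e * (s + c) \<and>
           mink (\<alpha> s) (\<alpha> s) = e * (s + c)^2 + K)"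
proof -
  have oI: "open I" and cI: "convex I" using I unfolding open_interval_def by (auto simp: is_interval_convex_1)
  have m0: "mink (\<alpha> s) (N1 s) = 0" if "s \<in> I" for s
    using R that F unfolding frm_def by (auto simp: mink_simps mink_sym)
  have dG: "((\<lambda>s. mink (\<alpha> s) (T s)) has_real_derivative e) (at s)" if s: "s \<in> I" for s
  proof -
    have "((\<lambda>s. mink (\<alpha> s) (T s)) has_real_derivative (mink (\<alpha> s) (\<kappa> s *\<^sub>R N1 s) + mink (T s) (T s))) (at s)"
      using F s unfolding frm_def by (intro mink_deriv) auto
    then show ?thesis using m0[OF s] eT s by (simp add: mink_simps)
  qed
  have "\<exists>c0. \<forall>s\<in>I. mink (\<alpha> s) (T s) - e * s = c0"
  proof (rule has_field_derivative_zero_constant[OF cI])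
    fix s assume s: "s \<in> I"
    have "((\<lambda>s. mink (\<alpha> s) (T s) - e * s) has_real_derivative e - e * 1) (at s)"
      by (rule DERIV_diff[OF dG[OF s]]) (auto intro!: derivative_eq_intros)
    then show "((\<lambda>s. mink (\<alpha> s) (T s) - e * s) has_real_derivative 0) (at s within I)"
      by (simp add: has_field_derivative_at_within)
  qed
  then obtain c0 where c0': "\<forall>s\<in>I. mink (\<alpha> s) (T s) - e * s = c0" by blast
  have c0: "mink (\<alpha> s) (T s) = e * s + c0" if "s \<in> I" for s using c0' that by force
  define c where "c = e * c0"
  have G: "mink (\<alpha> s) (T s) = e * (s + c)" if "s \<in> I" for s
    using c0[OF that] e by (simp add: c_def algebra_simps)
  have "\<exists>K. \<forall>s\<in>I. mink (\<alpha> s) (\<alpha> s) - e * (s + c)^2 = K"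
  proof (rule has_field_derivative_zero_constant[OF cI])
    fix s assume s: "s \<in> I"
    have "((\<lambda>s. mink (\<alpha> s) (\<alpha> s)) has_real_derivative (mink (\<alpha> s) (T s) + mink (T s) (\<alpha> s))) (at s)"
      using F s unfolding frm_def by (intro mink_deriv) auto
    then have "((\<lambda>s. mink (\<alpha> s) (\<alpha> s) - e * (s + c)^2) has_real_derivative
        (mink (\<alpha> s) (T s) + mink (T s) (\<alpha> s)) - e * (2 * (s + c))) (at s)"
      by (rule DERIV_diff) (auto intro!: derivative_eq_intros)
    then show "((\<lambda>s. mink (\<alpha> s) (\<alpha> s) - e * (s + c)^2) has_real_derivative 0) (at s within I)"
      using G[OF s] by (simp add: mink_sym algebra_simps) (rule has_field_derivative_at_within)
  qed
  then obtain K where K': "\<forall>s\<in>I. mink (\<alpha> s) (\<alpha> s) - e * (s + c)^2 = K" by blast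
  have K: "mink (\<alpha> s) (\<alpha> s) = e * (s + c)^2 + K" if "s \<in> I" for s using K' that by force
  have Kmu: "K = f * (mu s)^2" if s: "s \<in> I" for s
  proof -
    have o: "mink (T s) (N2 s) = 0" using F s unfolding frm_def by auto
    have "mink (\<alpha> s) (T s) = lam s * e" using R s eT o by (auto simp: mink_simps mink_sym)
    then have l: "lam s = s + c" using G[OF s] e by (metis mult.assoc mult.commute mult_cancel_left1 mult_eq_0_iff zero_neq_one)
    have "mink (\<alpha> s) (\<alpha> s) = e * (lam s)^2 + f * (mu s)^2"
      using R s eT fN o by (auto simp: mink_simps mink_sym power2_eq_square algebra_simps)
    then show ?thesis using K[OF s] l by simp
  qed
  have "K * f > 0"
  proof (rule ccontr)
    assume "\<not> K * f > 0"
    then have mu0: "mu s = 0" if "s \<in> I" for s using Kmu[OF that] f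
      by (metis (no_types, opaque_lifting) mult.commute mult.left_neutral mult.assoc not_less power2_eq_square zero_less_mult_iff zero_less_power2 power_not_zero)
    have z: "s + c = 0" if s: "s \<in> I" for s
    proof -
      have o: "mink (T s) (N2 s) = 0" using F s unfolding frm_def by auto
      have eq: "\<alpha> x = (x + c) *\<^sub>R T x" if "x \<in> I" for x
      proof -
        have "mink (\<alpha> x) (T x) = lam x * e" using R that eT F unfolding frm_def by (auto simp: mink_simps mink_sym)
        then have "lam x = x + c" using G[OF that] e by (metis mult.assoc mult.commute mult_cancel_left1 mult_eq_0_iff zero_neq_one)
        then show ?thesis using R mu0 that by auto
      qed
      have d1: "(\<alpha> has_vector_derivative T s) (at s)" using F s unfolding frm_def by auto
      have "((\<lambda>x. (x + c) *\<^sub>R T x) has_vector_derivative ((s + c) *\<^sub>R (\<kappa> s *\<^sub>R N1 s) + (1 + 0) *\<^sub>R T s)) (at s)"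
        using F s unfolding frm_def by (intro derivative_intros) auto
      then have "(\<alpha> has_vector_derivative ((s + c) *\<^sub>R (\<kappa> s *\<^sub>R N1 s) + (1 + 0) *\<^sub>R T s)) (at s)"
        by (rule has_vector_derivative_transform_within_open[OF _ oI s]) (simp add: eq)
      from vector_derivative_unique_at[OF d1 this]
      have "((s + c) * \<kappa> s) *\<^sub>R N1 s = 0" by simp
      moreover have "N1 s \<noteq> 0" "\<kappa> s > 0" using F s unfolding frm_def by auto
      ultimately show ?thesis by auto
    qed
    obtain s1 s2 where "s1 \<in> I" "s2 \<in> I" "s1 \<noteq> s2" using open_interval_two[OF I] .
    then show False using z[of s1] z[of s2] by auto
  qed
  with G K show ?thesis by blast
qed



lemma tanh_artanh_real:
  fixes x :: real assumes "\<bar>x\<bar> < 1" shows "tanh (artanh x) = x"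
proof -
  define q where "q = (1 + x) / (1 - x)"
  have q: "q > 0" using assms by (auto simp: q_def)
  have "exp (- 2 * artanh x) = 1 / q"
    using q by (simp add: artanh_def q_def[symmetric] exp_minus exp_ln inverse_eq_divide)
  then have "tanh (artanh x) = (1 - 1/q) / (1 + 1/q)" by (simp add: tanh_real_altdef)
  also have "\<dots> = x" using assms q by (simp add: q_def field_simps)
  finally show ?thesis .
qed

lemma vel_works: "y differentiable (at t) \<Longrightarrow> (y has_vector_derivative vel y t) (at t)"
  unfolding vel_def using vector_derivative_works by blast

lemma real_vd: "(f has_real_derivative d) (at t) \<Longrightarrow> (f has_vector_derivative d) (at t)"
  by (simp add: has_real_derivative_iff_has_vector_derivative)

lemma const_deriv_zero:
  fixes h :: "real \<Rightarrow> real"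
  assumes "open J" "t \<in> J" "\<And>x. x \<in> J \<Longrightarrow> h x = k" "(h has_real_derivative d) (at t)"
  shows "d = 0"
proof -
  have "((\<lambda>x. k) has_real_derivative d) (at t)"
    by (rule has_field_derivative_transform_within_open[OF assms(4) assms(1) assms(2)]) (simp add: assms(3))
  then show ?thesis using DERIV_const DERIV_unique by blast
qed

lemma eq_deriv:
  fixes h1 h2 :: "real \<Rightarrow> real"
  assumes "open J" "t \<in> J" "\<And>x. x \<in> J \<Longrightarrow> h1 x = h2 x" "(h1 has_real_derivative d1) (at t)"
    "(h2 has_real_derivative d2) (at t)"
  shows "d1 = d2"
proof -
  have "(h2 has_real_derivative d1) (at t)"
    by (rule has_field_derivative_transform_within_open[OF assms(4) assms(1) assms(2)]) (simp add: assms(3))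
  then show ?thesis using assms(5) DERIV_unique by blast
qed

lemma sign_lemma:
  fixes m e A B :: real
  assumes "m = 1 \<or> m = -1" "e = 1 \<or> e = -1" "A * m = e * B" "A > 0" "B > 0"
  shows "m = e \<and> A = B"
  using assms by auto

lemma sq_pos_eq:
  fixes a b :: real
  assumes "a^2 = b^2" "b > 0" shows "a > 0 \<Longrightarrow> a = b" "a < 0 \<Longrightarrow> a = - b"
  using assms by (auto simp: power2_eq_iff)

lemma rev_core:
  assumes I: "open_interval I" and F: "frm \<alpha> I T N1 N2 \<kappa>" and RP: "reparam \<phi> J I"
    and A: "\<And>t. t \<in> J \<Longrightarrow> \<alpha> (\<phi> t) = g t *\<^sub>R y t"
    and Y1: "\<And>t. t \<in> J \<Longrightarrow> y differentiable (at t) \<and> mink (y t) (y t) = ey \<and> mink (vel y t) (vel y t) = ev"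
    and Gd: "\<And>t. t \<in> J \<Longrightarrow> (g has_real_derivative gd t) (at t) \<and> g t \<noteq> 0"
    and Pp: "\<And>t. t \<in> J \<Longrightarrow> P t > 0 \<and> e0 * (P t)^2 = (gd t)^2 * ey + (g t)^2 * ev
              \<and> g t * gd t * ey = Gf t * P t \<and> (Gf has_real_derivative e0 * P t) (at t)
              \<and> (g t)^2 * ey - e0 * (Gf t)^2 = K0"
    and e0: "e0 = 1 \<or> e0 = -1" and K0: "K0 \<noteq> 0" and ey: "ey \<noteq> 0"
  shows "rectifying_curve \<alpha> I T N2 \<and> (\<forall>s\<in>I. mink (T s) (T s) = e0 \<and> mink (N2 s) (N2 s) * K0 > 0
            \<and> ey * mink (\<alpha> s) (\<alpha> s) > 0)"
proof -
  have oJ: "open J" and iJ: "is_interval J" and bij: "bij_betw \<phi> J I"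
    using RP unfolding reparam_def open_interval_def by auto
  have oI: "open I" using I unfolding open_interval_def by auto
  define pd where "pd t = (SOME d. (\<phi> has_real_derivative d) (at t) \<and> d \<noteq> 0)" for t
  have pd: "(\<phi> has_real_derivative pd t) (at t) \<and> pd t \<noteq> 0" if "t \<in> J" for t
    using RP that unfolding reparam_def pd_def by (metis (mono_tags, lifting) someI_ex)
  have inj: "inj_on \<phi> J" using bij by (simp add: bij_betw_def)
  have phiI: "\<phi> t \<in> I" if "t \<in> J" for t using bij that by (auto simp: bij_betw_def)
  have Fs: "(\<alpha> has_vector_derivative T s) (at s) \<and> (T has_vector_derivative (\<kappa> s *\<^sub>R N1 s)) (at s) \<and> \<kappa> s > 0 \<and>
        N1 differentiable (at s) \<and> N2 differentiable (at s) \<and>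
        \<bar>mink (T s) (T s)\<bar> = 1 \<and> \<bar>mink (N1 s) (N1 s)\<bar> = 1 \<and> \<bar>mink (N2 s) (N2 s)\<bar> = 1 \<and>
        mink (T s) (N1 s) = 0 \<and> mink (T s) (N2 s) = 0 \<and> mink (N1 s) (N2 s) = 0" if "s \<in> I" for s
    using F that unfolding frm_def by blast
  obtain \<sigma> where sg: "\<sigma> = 1 \<or> \<sigma> = -1" "\<And>t. t \<in> J \<Longrightarrow> pd t = \<sigma> * P t"
    and eT: "\<And>t. t \<in> J \<Longrightarrow> mink (T (\<phi> t)) (T (\<phi> t)) = e0"
    and GP: "\<And>t. t \<in> J \<Longrightarrow> mink (\<alpha> (\<phi> t)) (T (\<phi> t)) = \<sigma> * Gf t"
  proof -
    have key: "mink (T (\<phi> t)) (T (\<phi> t)) = e0 \<and> (pd t)^2 = (P t)^2 \<and> mink (\<alpha> (\<phi> t)) (T (\<phi> t)) * pd t = Gf t * P t"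
      if t: "t \<in> J" for t
    proof -
      let ?s = "\<phi> t"
      have s: "?s \<in> I" using phiI t .
      have yd: "(y has_vector_derivative vel y t) (at t)" using Y1[OF t] vel_works by blast
      have d1: "((\<alpha> \<circ> \<phi>) has_vector_derivative (pd t *\<^sub>R T ?s)) (at t)"
        using vector_diff_chain_at[OF real_vd[OF conjunct1[OF pd[OF t]]]] Fs[OF s] by blast
      have d2: "((\<lambda>t. g t *\<^sub>R y t) has_vector_derivative (g t *\<^sub>R vel y t + gd t *\<^sub>R y t)) (at t)"
        using Gd[OF t] yd by (intro has_vector_derivative_scaleR) auto
      have d1': "((\<lambda>t. g t *\<^sub>R y t) has_vector_derivative (pd t *\<^sub>R T ?s)) (at t)"
        by (rule has_vector_derivative_transform_within_open[OF d1 oJ t]) (simp add: A)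
      have V: "pd t *\<^sub>R T ?s = g t *\<^sub>R vel y t + gd t *\<^sub>R y t"
        using vector_derivative_unique_at[OF d1' d2] .
      have yy: "mink (y t) (vel y t) = 0"
      proof -
        have "((\<lambda>x. mink (y x) (y x)) has_real_derivative (mink (y t) (vel y t) + mink (vel y t) (y t))) (at t)"
          using mink_deriv[OF yd yd] .
        from const_deriv_zero[OF oJ t _ this, of ey] Y1 show ?thesis by (simp add: mink_sym)
      qed
      have "(pd t)^2 * mink (T ?s) (T ?s) = mink (pd t *\<^sub>R T ?s) (pd t *\<^sub>R T ?s)"
        by (simp add: mink_simps power2_eq_square)
      also have "\<dots> = (gd t)^2 * ey + (g t)^2 * ev"
        unfolding V using Y1[OF t] yy by (simp add: mink_simps mink_sym power2_eq_square algebra_simps)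
      also have "\<dots> = e0 * (P t)^2" using Pp[OF t] by simp
      finally have E1: "(pd t)^2 * mink (T ?s) (T ?s) = e0 * (P t)^2" .
      have ab: "\<bar>mink (T ?s) (T ?s)\<bar> = 1" using Fs[OF s] by blast
      have pos: "(pd t)^2 > 0" "(P t)^2 > 0" using pd[OF t] Pp[OF t] by auto
      have "mink (T ?s) (T ?s) = 1 \<or> mink (T ?s) (T ?s) = -1" using ab by auto
      from sign_lemma[OF this e0 E1 pos]
      have eq1: "mink (T ?s) (T ?s) = e0" and eq2: "(pd t)^2 = (P t)^2" by auto
      have dH1: "((\<lambda>x. mink (\<alpha> (\<phi> x)) (\<alpha> (\<phi> x))) has_real_derivative
          (mink (\<alpha> ?s) (pd t *\<^sub>R T ?s) + mink (pd t *\<^sub>R T ?s) (\<alpha> ?s))) (at t)"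
        using mink_deriv[OF d1 d1] by (simp add: o_def)
      have dH2: "((\<lambda>x. (g x)^2 * ey) has_real_derivative (2 * g t * gd t * ey)) (at t)"
        using Gd[OF t] by (auto intro!: derivative_eq_intros)
      have "mink (\<alpha> ?s) (pd t *\<^sub>R T ?s) + mink (pd t *\<^sub>R T ?s) (\<alpha> ?s) = 2 * g t * gd t * ey"
      proof (rule eq_deriv[OF oJ t _ dH1 dH2])
        fix x assume x: "x \<in> J"
        show "mink (\<alpha> (\<phi> x)) (\<alpha> (\<phi> x)) = (g x)^2 * ey"
          using A[OF x] Y1[OF x] by (simp add: mink_simps power2_eq_square)
      qed
      then have "mink (\<alpha> ?s) (T ?s) * pd t = g t * gd t * ey"
        by (simp add: mink_simps mink_sym algebra_simps)
      then show ?thesis using eq1 eq2 Pp[OF t] by simp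
    qed
    have sc: "(\<forall>t\<in>J. pd t > 0) \<or> (\<forall>t\<in>J. pd t < 0)"
      by (rule deriv_sign_const[OF iJ inj]) (use pd in blast)
    have Pne: "\<And>t. t \<in> J \<Longrightarrow> P t > 0" using Pp by blast
    show ?thesis
    proof (cases "\<forall>t\<in>J. pd t > 0")
      case True
      have pdP: "pd t = 1 * P t" if "t \<in> J" for t
        using sq_pos_eq(1)[of "pd t" "P t"] key[OF that] True that Pne[OF that] by simp
      show ?thesis
      proof (rule that[of 1])
        fix t assume t: "t \<in> J"
        show "mink (\<alpha> (\<phi> t)) (T (\<phi> t)) = 1 * Gf t"
          using key[OF t] pdP[OF t] Pne[OF t] by simp
      qed (use key pdP in auto)
    next
      case False
      with sc have neg: "\<forall>t\<in>J. pd t < 0" by blast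
      have pdP: "pd t = -1 * P t" if "t \<in> J" for t
        using sq_pos_eq(2)[of "pd t" "P t"] key[OF that] neg that Pne[OF that] by simp
      show ?thesis
      proof (rule that[of "-1"])
        fix t assume t: "t \<in> J"
        have "mink (\<alpha> (\<phi> t)) (T (\<phi> t)) * (- P t) = Gf t * P t"
          using key[OF t] pdP[OF t] by simp
        then have "P t * (mink (\<alpha> (\<phi> t)) (T (\<phi> t)) + Gf t) = 0" by (simp add: algebra_simps)
        then show "mink (\<alpha> (\<phi> t)) (T (\<phi> t)) = -1 * Gf t"
          using Pne[OF t] by simp
      qed (use key pdP in auto)
    qed
  qed
  have surj: "\<exists>t\<in>J. s = \<phi> t" if "s \<in> I" for s using bij that by (auto simp: bij_betw_def)
  have m0: "mink (\<alpha> s) (N1 s) = 0" if s: "s \<in> I" for s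
  proof -
    obtain t where t: "t \<in> J" and st: "s = \<phi> t" using surj[OF s] by blast
    have dG: "((\<lambda>x. mink (\<alpha> x) (T x)) has_real_derivative (mink (\<alpha> s) (\<kappa> s *\<^sub>R N1 s) + mink (T s) (T s))) (at s)"
      using Fs[OF s] by (intro mink_deriv) auto
    have dGp: "((\<lambda>x. mink (\<alpha> (\<phi> x)) (T (\<phi> x))) has_real_derivative
         (mink (\<alpha> s) (\<kappa> s *\<^sub>R N1 s) + mink (T s) (T s)) * pd t) (at t)"
      using DERIV_chain2[OF dG[unfolded st] conjunct1[OF pd[OF t]]] st by simp
    have dGf: "((\<lambda>x. \<sigma> * Gf x) has_real_derivative \<sigma> * (e0 * P t)) (at t)"
      using Pp[OF t] by (auto intro!: derivative_eq_intros)
    have "(mink (\<alpha> s) (\<kappa> s *\<^sub>R N1 s) + mink (T s) (T s)) * pd t = \<sigma> * (e0 * P t)"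
      by (rule eq_deriv[OF oJ t _ dGp dGf]) (simp add: GP)
    then have "(\<kappa> s * mink (\<alpha> s) (N1 s) + e0) * (\<sigma> * P t) = \<sigma> * (e0 * P t)"
      using eT[OF t] sg(2)[OF t] st by (simp add: mink_simps)
    then have "\<kappa> s * mink (\<alpha> s) (N1 s) * (\<sigma> * P t) = 0" by (simp add: algebra_simps)
    moreover have "\<kappa> s > 0" using Fs[OF s] by blast
    moreover have "\<sigma> * P t \<noteq> 0" using sg(1) Pp[OF t] by auto
    ultimately show ?thesis by simp
  qed
  have eTI: "mink (T s) (T s) = e0" if s: "s \<in> I" for s
    using surj[OF s] eT by blast
  define lam where "lam s = e0 * mink (\<alpha> s) (T s)" for s
  define mu where "mu s = mink (N2 s) (N2 s) * mink (\<alpha> s) (N2 s)" for s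
  have dec: "\<alpha> s = lam s *\<^sub>R T s + mu s *\<^sub>R N2 s" if s: "s \<in> I" for s
  proof -
    have "\<alpha> s = (mink (T s) (T s) * mink (\<alpha> s) (T s)) *\<^sub>R T s + (mink (N1 s) (N1 s) * mink (\<alpha> s) (N1 s)) *\<^sub>R N1 s
              + (mink (N2 s) (N2 s) * mink (\<alpha> s) (N2 s)) *\<^sub>R N2 s"
      using Fs[OF s] by (intro frame_decomp) auto
    then show ?thesis using m0[OF s] eTI[OF s] by (simp add: lam_def mu_def)
  qed
  have rect: "rectifying_curve \<alpha> I T N2"
    unfolding rectifying_curve_def
  proof (intro exI ballI conjI)
    fix s assume s: "s \<in> I"
    have aT: "(\<alpha> has_vector_derivative T s) (at s)" "(T has_vector_derivative (\<kappa> s *\<^sub>R N1 s)) (at s)"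
      using Fs[OF s] by auto
    have n2: "(N2 has_vector_derivative vector_derivative N2 (at s)) (at s)"
      using Fs[OF s] vector_derivative_works by blast
    show "lam differentiable (at s)"
      unfolding lam_def
      by (rule differentiableI[OF has_field_derivative_imp_has_derivative])
        (rule DERIV_cmult[OF mink_deriv[OF aT]])
    show "mu differentiable (at s)"
      unfolding mu_def
      by (rule differentiableI[OF has_field_derivative_imp_has_derivative])
        (rule DERIV_mult[OF mink_deriv[OF n2 n2] mink_deriv[OF aT(1) n2]])
    show "\<alpha> s = lam s *\<^sub>R T s + mu s *\<^sub>R N2 s" using dec[OF s] .
  qed
  have rest: "mink (N2 s) (N2 s) * K0 > 0 \<and> ey * mink (\<alpha> s) (\<alpha> s) > 0" if s: "s \<in> I" for s
  proof -
    obtain t where t: "t \<in> J" and st: "s = \<phi> t" using surj[OF s] by blast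
    let ?f = "mink (N2 s) (N2 s)"
    have o: "mink (T s) (N2 s) = 0" using Fs[OF s] by blast
    have H: "mink (\<alpha> s) (\<alpha> s) = (g t)^2 * ey"
      using A[OF t] Y1[OF t] st by (simp add: mink_simps power2_eq_square)
    have "mink (\<alpha> s) (\<alpha> s) = mink (lam s *\<^sub>R T s + mu s *\<^sub>R N2 s) (lam s *\<^sub>R T s + mu s *\<^sub>R N2 s)"
      using dec[OF s] by simp
    also have "\<dots> = e0 * (lam s)^2 + ?f * (mu s)^2"
      using o eTI[OF s] by (simp add: mink_simps mink_sym power2_eq_square algebra_simps)
    finally have "mink (\<alpha> s) (\<alpha> s) = e0 * (lam s)^2 + ?f * (mu s)^2" .
    moreover have "e0 * (lam s)^2 = e0 * (Gf t)^2"
      using GP[OF t] st sg(1) e0 by (auto simp: lam_def power2_eq_square)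
    ultimately have "?f * (mu s)^2 = K0" using H Pp[OF t] by simp
    moreover have "?f = 1 \<or> ?f = -1" using Fs[OF s] by auto
    moreover have "(mu s)^2 > 0" using calculation K0 by auto
    ultimately have c1: "?f * K0 > 0" by auto
    have "(g t)^2 > 0" using Gd[OF t] by auto
    moreover have "ey * ey > 0" using ey by (simp add: zero_less_mult_iff linorder_neq_iff) blast
    ultimately have "(g t)^2 * (ey * ey) > 0" by simp
    moreover have "ey * mink (\<alpha> s) (\<alpha> s) = (g t)^2 * (ey * ey)" unfolding H by (simp add: algebra_simps)
    ultimately show ?thesis using c1 by metis
  qed
  show ?thesis using rect rest eTI by blast
qed



lemma reparam_inv:
  assumes I: "open_interval I" and D: "open D" and cpsi: "continuous_on I \<psi>" and cphi: "continuous_on D \<phi>"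
    and inv1: "\<And>s. s \<in> I \<Longrightarrow> \<psi> s \<in> D \<and> \<phi> (\<psi> s) = s"
    and inv2: "\<And>t. t \<in> D \<Longrightarrow> \<phi> t \<in> I \<Longrightarrow> \<psi> (\<phi> t) = t"
    and dphi: "\<And>t. t \<in> D \<Longrightarrow> (\<phi> has_real_derivative \<phi>d t) (at t) \<and> \<phi>d t \<noteq> 0"
  shows "reparam \<phi> (\<psi> ` I) I" "\<psi> ` I = D \<inter> \<phi> -` I"
proof -
  show JD: "\<psi> ` I = D \<inter> \<phi> -` I"
  proof
    show "\<psi> ` I \<subseteq> D \<inter> \<phi> -` I" using inv1 by auto
    show "D \<inter> \<phi> -` I \<subseteq> \<psi> ` I"
    proof
      fix t assume "t \<in> D \<inter> \<phi> -` I"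
      then have "t = \<psi> (\<phi> t)" "\<phi> t \<in> I" using inv2 by auto
      then show "t \<in> \<psi> ` I" by blast
    qed
  qed
  have oI: "open I" and iI: "is_interval I" and ne: "I \<noteq> {}" using I unfolding open_interval_def by auto
  have "open (\<phi> -` I \<inter> D)" using cphi D oI continuous_on_open_vimage by blast
  then have o: "open (\<psi> ` I)" unfolding JD by (simp add: Int_commute)
  have "connected (\<psi> ` I)"
    using connected_continuous_image[OF cpsi] iI is_interval_connected_1 by blast
  then have "is_interval (\<psi> ` I)" using is_interval_connected_1 by blast
  moreover have "\<psi> ` I \<noteq> {}" using ne by auto
  ultimately have "open_interval (\<psi> ` I)" using o unfolding open_interval_def by auto
  moreover have "bij_betw \<phi> (\<psi> ` I) I"
  proof (rule bij_betw_byWitness[where f'=\<psi>])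
    show "\<forall>a\<in>\<psi> ` I. \<psi> (\<phi> a) = a" using inv1 by auto
    show "\<forall>a'\<in>I. \<phi> (\<psi> a') = a'" using inv1 by auto
    show "\<phi> ` \<psi> ` I \<subseteq> I" using inv1 by auto
    show "\<psi> ` I \<subseteq> \<psi> ` I" by simp
  qed
  moreover have "\<forall>t\<in>\<psi> ` I. \<exists>d. (\<phi> has_real_derivative d) (at t) \<and> d \<noteq> 0"
    using dphi inv1 by blast
  ultimately show "reparam \<phi> (\<psi> ` I) I" unfolding reparam_def by blast
qed

lemma fwd_case:
  assumes I: "open_interval I" and F: "frm \<alpha> I T N1 N2 \<kappa>"
    and eT: "\<forall>s\<in>I. mink (T s) (T s) = e"
    and GH: "\<forall>s\<in>I. mink (\<alpha> s) (T s) = e * (s + c) \<and> mink (\<alpha> s) (\<alpha> s) = e * (s + c)^2 + K"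
    and D: "open D" and cpsi: "continuous_on I \<psi>" and cphi: "continuous_on D \<phi>"
    and inv1: "\<And>s. s \<in> I \<Longrightarrow> \<psi> s \<in> D \<and> \<phi> (\<psi> s) = s"
    and inv2: "\<And>t. t \<in> D \<Longrightarrow> \<phi> t \<in> I \<Longrightarrow> \<psi> (\<phi> t) = t"
    and dphi: "\<And>t. t \<in> D \<Longrightarrow> (\<phi> has_real_derivative \<phi>d t) (at t) \<and> \<phi>d t \<noteq> 0"
    and dg: "\<And>t. t \<in> D \<Longrightarrow> (g has_real_derivative gd t) (at t)"
    and us: "\<And>t. t \<in> D \<Longrightarrow> (gd t)^2 * (e * (\<phi> t + c)^2 + K) + 2 * g t * gd t * \<phi>d t * (e * (\<phi> t + c))
               + (g t)^2 * (\<phi>d t)^2 * e = ev"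
    and ps: "\<And>t. t \<in> D \<Longrightarrow> (g t)^2 * (e * (\<phi> t + c)^2 + K) = ey"
  shows "\<exists>J. reparam \<phi> J I \<and> (\<forall>t\<in>J. t \<in> D \<and> (\<lambda>t. g t *\<^sub>R \<alpha> (\<phi> t)) differentiable (at t) \<and>
           mink (vel (\<lambda>t. g t *\<^sub>R \<alpha> (\<phi> t)) t) (vel (\<lambda>t. g t *\<^sub>R \<alpha> (\<phi> t)) t) = ev \<and>
           mink (g t *\<^sub>R \<alpha> (\<phi> t)) (g t *\<^sub>R \<alpha> (\<phi> t)) = ey)"
proof (intro exI conjI ballI)
  note R = reparam_inv[OF I D cpsi cphi inv1 inv2 dphi]
  show "reparam \<phi> (\<psi> ` I) I" by (rule R(1))
  fix t assume t: "t \<in> \<psi> ` I"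
  then have tD: "t \<in> D" and s: "\<phi> t \<in> I" using R(2) by auto
  show "t \<in> D" by (rule tD)
  let ?y = "\<lambda>t. g t *\<^sub>R \<alpha> (\<phi> t)"
  have aT: "(\<alpha> has_vector_derivative T (\<phi> t)) (at (\<phi> t))" using F s unfolding frm_def by blast
  have d1: "((\<alpha> \<circ> \<phi>) has_vector_derivative (\<phi>d t *\<^sub>R T (\<phi> t))) (at t)"
    using vector_diff_chain_at[OF real_vd[OF conjunct1[OF dphi[OF tD]]] aT] .
  have dy: "(?y has_vector_derivative (g t *\<^sub>R (\<phi>d t *\<^sub>R T (\<phi> t)) + gd t *\<^sub>R \<alpha> (\<phi> t))) (at t)"
    using has_vector_derivative_scaleR[OF dg[OF tD] d1] by (simp add: o_def)
  show "?y differentiable (at t)" using dy by (rule differentiableI_vector)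
  have v: "vel ?y t = g t *\<^sub>R (\<phi>d t *\<^sub>R T (\<phi> t)) + gd t *\<^sub>R \<alpha> (\<phi> t)"
    unfolding vel_def using dy by (rule vector_derivative_at)
  have m: "mink (T (\<phi> t)) (T (\<phi> t)) = e" "mink (\<alpha> (\<phi> t)) (T (\<phi> t)) = e * (\<phi> t + c)"
    "mink (\<alpha> (\<phi> t)) (\<alpha> (\<phi> t)) = e * (\<phi> t + c)^2 + K"
    "mink (T (\<phi> t)) (\<alpha> (\<phi> t)) = e * (\<phi> t + c)" using eT GH s by (auto simp: mink_sym)
  have "mink (vel ?y t) (vel ?y t) = (gd t)^2 * (e * (\<phi> t + c)^2 + K) + 2 * g t * gd t * \<phi>d t * (e * (\<phi> t + c))
               + (g t)^2 * (\<phi>d t)^2 * e"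
    unfolding v by (simp add: mink_simps m power2_eq_square algebra_simps)
  then show "mink (vel ?y t) (vel ?y t) = ev" using us[OF tD] by simp
  have "mink (?y t) (?y t) = (g t)^2 * (e * (\<phi> t + c)^2 + K)"
    by (simp add: mink_simps m power2_eq_square algebra_simps)
  then show "mink (?y t) (?y t) = ey" using ps[OF tD] by simp
qed



lemma Fs_of: assumes "frm \<alpha> I T N1 N2 \<kappa>" "s \<in> I"
  shows "(\<alpha> has_vector_derivative T s) (at s) \<and> (T has_vector_derivative (\<kappa> s *\<^sub>R N1 s)) (at s) \<and> \<kappa> s > 0 \<and>
        N1 differentiable (at s) \<and> N2 differentiable (at s) \<and>
        \<bar>mink (T s) (T s)\<bar> = 1 \<and> \<bar>mink (N1 s) (N1 s)\<bar> = 1 \<and> \<bar>mink (N2 s) (N2 s)\<bar> = 1 \<and>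
        mink (T s) (N1 s) = 0 \<and> mink (T s) (N2 s) = 0 \<and> mink (N1 s) (N2 s) = 0"
  using assms unfolding frm_def by blast

lemma case1:
  assumes I: "open_interval I" and F: "frm \<alpha> I T N1 N2 \<kappa>"
  shows "(rectifying_curve \<alpha> I T N2 \<and> (\<forall>s\<in>I. spacelike_plane (T s) (N2 s)))
      \<longleftrightarrow> (\<exists>J \<phi> a y. reparam \<phi> J I \<and> a > 0 \<and> unit_speed_spacelike y J \<and>
             (\<forall>t\<in>J. y t \<in> pseudosphere \<and> cos t \<noteq> 0 \<and> \<alpha> (\<phi> t) = (a / cos t) *\<^sub>R y t))"
proof
  assume L: "rectifying_curve \<alpha> I T N2 \<and> (\<forall>s\<in>I. spacelike_plane (T s) (N2 s))"
  then obtain lam mu where R: "\<forall>s\<in>I. \<alpha> s = lam s *\<^sub>R T s + mu s *\<^sub>R N2 s"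
    unfolding rectifying_curve_def by blast
  have eT: "\<forall>s\<in>I. mink (T s) (T s) = 1" and fN: "\<forall>s\<in>I. mink (N2 s) (N2 s) = 1"
  proof (safe)
    fix s assume s: "s \<in> I"
    have sp: "spacelike_plane (T s) (N2 s)" using L s by blast
    have fs: "\<bar>mink (T s) (T s)\<bar> = 1" "\<bar>mink (N2 s) (N2 s)\<bar> = 1" "mink (T s) (N2 s) = 0"
      using Fs_of[OF F s] by auto
    from sp fs show "mink (T s) (T s) = 1" unfolding spacelike_plane_def by auto
    with sp fs show "mink (N2 s) (N2 s) = 1" unfolding spacelike_plane_def by auto
  qed
  obtain c K where K: "K * 1 > 0" and GH: "\<forall>s\<in>I. mink (\<alpha> s) (T s) = 1 * (s + c) \<and>
           mink (\<alpha> s) (\<alpha> s) = 1 * (s + c)^2 + K"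
    using fwd_core[OF I F R eT fN] by auto
  define a where "a = sqrt K"
  have a: "a > 0" "K = a^2" using K by (auto simp: a_def)
  let ?D = "{-(pi/2)<..<pi/2}"
  have cosD: "cos t > 0" if "t \<in> ?D" for t using that by (auto intro: cos_gt_zero_pi)
  have "\<exists>J. reparam (\<lambda>t. a * tan t - c) J I \<and> (\<forall>t\<in>J. t \<in> ?D \<and> (\<lambda>t. (cos t / a) *\<^sub>R \<alpha> (a * tan t - c)) differentiable (at t) \<and>
           mink (vel (\<lambda>t. (cos t / a) *\<^sub>R \<alpha> (a * tan t - c)) t) (vel (\<lambda>t. (cos t / a) *\<^sub>R \<alpha> (a * tan t - c)) t) = 1 \<and>
           mink ((cos t / a) *\<^sub>R \<alpha> (a * tan t - c)) ((cos t / a) *\<^sub>R \<alpha> (a * tan t - c)) = 1)"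
  proof (rule fwd_case[OF I F eT GH, where \<psi>="\<lambda>s. arctan ((s + c) / a)" and \<phi>d="\<lambda>t. a / (cos t)^2"
        and gd="\<lambda>t. - sin t / a"])
    show "open ?D" by simp
    show "continuous_on I (\<lambda>s. arctan ((s + c) / a))" using a by (intro continuous_intros) auto
    show "continuous_on ?D (\<lambda>t. a * tan t - c)"
    proof (intro continuous_intros ballI)
      fix t assume "t \<in> ?D" then show "cos t \<noteq> 0" using cosD[of t] by simp
    qed
    fix s assume "s \<in> I"
    show "arctan ((s + c) / a) \<in> ?D \<and> a * tan (arctan ((s + c) / a)) - c = s"
      using a arctan_lbound arctan_ubound by (auto simp: tan_arctan)
  next
    fix t assume "t \<in> ?D"
    then show "arctan ((a * tan t - c + c) / a) = t" using a by (auto simp: arctan_tan)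
  next
    fix t assume t: "t \<in> ?D"
    have "cos t \<noteq> 0" using cosD[OF t] by simp
    then show "((\<lambda>t. a * tan t - c) has_real_derivative a / (cos t)^2) (at t) \<and> a / (cos t)^2 \<noteq> 0"
      using a by (auto intro!: derivative_eq_intros simp: field_simps power2_eq_square)
  next
    fix t assume t: "t \<in> ?D"
    show "((\<lambda>t. cos t / a) has_real_derivative - sin t / a) (at t)"
      using a by (auto intro!: derivative_eq_intros)
  next
    fix t assume t: "t \<in> ?D"
    have p: "(sin t)^2 + (cos t)^2 = 1" by simp
    have "cos t \<noteq> 0" using cosD[OF t] by simp
    then show "(- sin t / a)^2 * (1 * (a * tan t - c + c)^2 + K) + 2 * (cos t / a) * (- sin t / a) * (a / (cos t)^2) * (1 * (a * tan t - c + c))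
               + (cos t / a)^2 * (a / (cos t)^2)^2 * 1 = 1"
      using a unfolding tan_def by (simp add: field_simps) (use p in algebra)
  next
    fix t assume t: "t \<in> ?D"
    have p: "(sin t)^2 + (cos t)^2 = 1" by simp
    have "cos t \<noteq> 0" using cosD[OF t] by simp
    then show "(cos t / a)^2 * (1 * (a * tan t - c + c)^2 + K) = 1"
      using a unfolding tan_def by (simp add: field_simps) (use p in algebra)
  qed
  then obtain J where J: "reparam (\<lambda>t. a * tan t - c) J I" and J2: "\<forall>t\<in>J. t \<in> ?D \<and> (\<lambda>t. (cos t / a) *\<^sub>R \<alpha> (a * tan t - c)) differentiable (at t) \<and>
           mink (vel (\<lambda>t. (cos t / a) *\<^sub>R \<alpha> (a * tan t - c)) t) (vel (\<lambda>t. (cos t / a) *\<^sub>R \<alpha> (a * tan t - c)) t) = 1 \<and>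
           mink ((cos t / a) *\<^sub>R \<alpha> (a * tan t - c)) ((cos t / a) *\<^sub>R \<alpha> (a * tan t - c)) = 1" by blast
  show "\<exists>J \<phi> a y. reparam \<phi> J I \<and> a > 0 \<and> unit_speed_spacelike y J \<and>
             (\<forall>t\<in>J. y t \<in> pseudosphere \<and> cos t \<noteq> 0 \<and> \<alpha> (\<phi> t) = (a / cos t) *\<^sub>R y t)"
  proof (intro exI conjI ballI)
    show "reparam (\<lambda>t. a * tan t - c) J I" by (rule J)
    show "a > 0" by (rule a)
    show "unit_speed_spacelike (\<lambda>t. (cos t / a) *\<^sub>R \<alpha> (a * tan t - c)) J"
      unfolding unit_speed_spacelike_def using J2 by blast
    fix t assume t: "t \<in> J"
    have ct: "cos t \<noteq> 0" using J2 t cosD by force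
    show "(cos t / a) *\<^sub>R \<alpha> (a * tan t - c) \<in> pseudosphere" using J2 t by (simp add: pseudosphere_def)
    show "cos t \<noteq> 0" by (rule ct)
    show "\<alpha> (a * tan t - c) = (a / cos t) *\<^sub>R (cos t / a) *\<^sub>R \<alpha> (a * tan t - c)"
      using ct a by simp
  qed
next
  assume "\<exists>J \<phi> a y. reparam \<phi> J I \<and> a > 0 \<and> unit_speed_spacelike y J \<and>
             (\<forall>t\<in>J. y t \<in> pseudosphere \<and> cos t \<noteq> 0 \<and> \<alpha> (\<phi> t) = (a / cos t) *\<^sub>R y t)"
  then obtain J \<phi> a y where RP: "reparam \<phi> J I" and a: "a > 0" and us: "unit_speed_spacelike y J"
    and Y: "\<forall>t\<in>J. y t \<in> pseudosphere \<and> cos t \<noteq> 0 \<and> \<alpha> (\<phi> t) = (a / cos t) *\<^sub>R y t" by blast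
  have "rectifying_curve \<alpha> I T N2 \<and> (\<forall>s\<in>I. mink (T s) (T s) = 1 \<and> mink (N2 s) (N2 s) * (a^2) > 0
            \<and> 1 * mink (\<alpha> s) (\<alpha> s) > 0)"
  proof (rule rev_core[OF I F RP, where g="\<lambda>t. a / cos t" and y=y and ey=1 and ev=1
        and gd="\<lambda>t. a * sin t / (cos t)^2" and P="\<lambda>t. a / (cos t)^2" and Gf="\<lambda>t. a * sin t / cos t"])
    fix t assume t: "t \<in> J"
    have ct: "cos t \<noteq> 0" using Y t by blast
    have p: "(sin t)^2 + (cos t)^2 = 1" by simp
    show "\<alpha> (\<phi> t) = (a / cos t) *\<^sub>R y t" using Y t by blast
    show "y differentiable (at t) \<and> mink (y t) (y t) = 1 \<and> mink (vel y t) (vel y t) = 1"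
      using us Y t unfolding unit_speed_spacelike_def pseudosphere_def by auto
    show "((\<lambda>t. a / cos t) has_real_derivative a * sin t / (cos t)^2) (at t) \<and> a / cos t \<noteq> 0"
      using ct a by (auto intro!: derivative_eq_intros simp: field_simps power2_eq_square)
    show "a / (cos t)^2 > 0 \<and> 1 * (a / (cos t)^2)^2 = (a * sin t / (cos t)^2)^2 * 1 + (a / cos t)^2 * 1 \<and>
          a / cos t * (a * sin t / (cos t)^2) * 1 = a * sin t / cos t * (a / (cos t)^2) \<and>
          ((\<lambda>t. a * sin t / cos t) has_real_derivative 1 * (a / (cos t)^2)) (at t) \<and>
          (a / cos t)^2 * 1 - 1 * (a * sin t / cos t)^2 = a^2"
    proof (intro conjI)
      show "a / (cos t)^2 > 0" using a ct by simp
      show "1 * (a / (cos t)^2)^2 = (a * sin t / (cos t)^2)^2 * 1 + (a / cos t)^2 * 1"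
        using ct by (simp add: field_simps) (use p in algebra)
      show "a / cos t * (a * sin t / (cos t)^2) * 1 = a * sin t / cos t * (a / (cos t)^2)"
        using ct by (simp add: field_simps power2_eq_square)
      show "((\<lambda>t. a * sin t / cos t) has_real_derivative 1 * (a / (cos t)^2)) (at t)"
        using ct by (auto intro!: derivative_eq_intros simp: field_simps) (use p in algebra)
      show "(a / cos t)^2 * 1 - 1 * (a * sin t / cos t)^2 = a^2"
        using ct by (simp add: field_simps) (use p in algebra)
    qed
  qed (use a in auto)
  then show "rectifying_curve \<alpha> I T N2 \<and> (\<forall>s\<in>I. spacelike_plane (T s) (N2 s))"
  proof (intro conjI ballI)
    fix s assume s: "s \<in> I"
    assume "rectifying_curve \<alpha> I T N2 \<and> (\<forall>s\<in>I. mink (T s) (T s) = 1 \<and> mink (N2 s) (N2 s) * (a^2) > 0 \<and> 1 * mink (\<alpha> s) (\<alpha> s) > 0)"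
    then have "mink (T s) (T s) = 1" "mink (N2 s) (N2 s) > 0" using s a by (auto simp: zero_less_mult_iff)
    moreover have "mink (T s) (N2 s) = 0" using Fs_of[OF F s] by blast
    ultimately show "spacelike_plane (T s) (N2 s)" unfolding spacelike_plane_def by simp
  qed auto
qed



lemma abs_less_sq: "\<bar>x::real\<bar> < \<bar>y\<bar> \<longleftrightarrow> x^2 < y^2"
  using abs_le_square_iff[of y x] by linarith

lemma coth_param:
  fixes a c :: real
  assumes a: "a > 0" and H: "\<And>s. s \<in> I \<Longrightarrow> (s + c)^2 > a^2"
  shows "continuous_on I (\<lambda>s. artanh (a / (s + c)))"
    and "continuous_on (- {0}) (\<lambda>t. a * cosh t / sinh t - c)"
    and "\<And>s. s \<in> I \<Longrightarrow> artanh (a / (s + c)) \<in> - {0} \<and> a * cosh (artanh (a / (s + c))) / sinh (artanh (a / (s + c))) - c = s"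
    and "\<And>t. t \<in> - {0} \<Longrightarrow> a * cosh t / sinh t - c \<in> I \<Longrightarrow> artanh (a / (a * cosh t / sinh t - c + c)) = t"
    and "\<And>t. t \<in> - {0} \<Longrightarrow> ((\<lambda>t. a * cosh t / sinh t - c) has_real_derivative - a / (sinh t)^2) (at t) \<and> - a / (sinh t)^2 \<noteq> 0"
proof -
  have x: "\<bar>a / (s + c)\<bar> < 1 \<and> s + c \<noteq> 0" if "s \<in> I" for s
  proof -
    have h: "\<bar>a\<bar> < \<bar>s + c\<bar>" using H[OF that] abs_less_sq by blast
    then have "\<bar>a\<bar> / \<bar>s + c\<bar> < 1" by (simp add: divide_less_eq_1)
    then show ?thesis using h by (simp add: abs_divide)
  qed
  have x': "s + c \<noteq> 0 \<and> a / (s + c) \<in> {-1<..<1}" if "s \<in> I" for s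
    using x[OF that] unfolding abs_less_iff by auto
  show "continuous_on I (\<lambda>s. artanh (a / (s + c)))"
    using x' by (intro continuous_intros) auto
  show "continuous_on (- {0}) (\<lambda>t. a * cosh t / sinh t - c)"
    by (intro continuous_intros) auto
  fix s assume s: "s \<in> I"
  define u where "u = artanh (a / (s + c))"
  have tu: "tanh u = a / (s + c)" using x[OF s] by (simp add: u_def tanh_artanh_real)
  have "a / (s + c) \<noteq> 0" using x[OF s] a by auto
  then have u0: "u \<noteq> 0" using tu by auto
  have su: "sinh u \<noteq> 0" using u0 by simp
  have "cosh u / sinh u = (s + c) / a" using tu su a x[OF s] by (simp add: tanh_def field_simps)
  then have "a * cosh u / sinh u - c = s" using a by (simp add: field_simps)
  then show "artanh (a / (s + c)) \<in> - {0} \<and> a * cosh (artanh (a / (s + c))) / sinh (artanh (a / (s + c))) - c = s"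
    using u0 unfolding u_def by auto
next
  fix t :: real assume t: "t \<in> - {0}"
  then have st: "sinh t \<noteq> 0" by simp
  have "a / (a * cosh t / sinh t - c + c) = tanh t" using st a by (simp add: tanh_def field_simps)
  then show "artanh (a / (a * cosh t / sinh t - c + c)) = t" by (simp add: artanh_tanh_real)
next
  fix t :: real assume t: "t \<in> - {0}"
  then have st: "sinh t \<noteq> 0" by simp
  have p: "(cosh t)^2 - (sinh t)^2 = 1" by (rule hyperbolic_pythagoras)
  have "((\<lambda>t. a * cosh t / sinh t - c) has_real_derivative - a / (sinh t)^2) (at t)"
    using st by (auto intro!: derivative_eq_intros simp: field_simps) (use p in algebra)
  then show "((\<lambda>t. a * cosh t / sinh t - c) has_real_derivative - a / (sinh t)^2) (at t) \<and> - a / (sinh t)^2 \<noteq> 0"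
    using st a by simp
qed

lemma tanh_param:
  fixes a c :: real
  assumes a: "a > 0" and H: "\<And>s. s \<in> I \<Longrightarrow> (s + c)^2 < a^2"
  shows "continuous_on I (\<lambda>s. artanh ((s + c) / a))"
    and "continuous_on UNIV (\<lambda>t. a * sinh t / cosh t - c)"
    and "\<And>s. s \<in> I \<Longrightarrow> artanh ((s + c) / a) \<in> UNIV \<and> a * sinh (artanh ((s + c) / a)) / cosh (artanh ((s + c) / a)) - c = s"
    and "\<And>t. t \<in> UNIV \<Longrightarrow> a * sinh t / cosh t - c \<in> I \<Longrightarrow> artanh ((a * sinh t / cosh t - c + c) / a) = t"
    and "\<And>t. t \<in> UNIV \<Longrightarrow> ((\<lambda>t. a * sinh t / cosh t - c) has_real_derivative a / (cosh t)^2) (at t) \<and> a / (cosh t)^2 \<noteq> 0"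
proof -
  have x: "\<bar>(s + c) / a\<bar> < 1" if "s \<in> I" for s
  proof -
    have h: "\<bar>s + c\<bar> < \<bar>a\<bar>" using H[OF that] abs_less_sq by blast
    then have "\<bar>s + c\<bar> / \<bar>a\<bar> < 1" by (simp add: divide_less_eq_1)
    then show ?thesis by (simp add: abs_divide)
  qed
  have x': "(s + c) / a \<in> {-1<..<1}" if "s \<in> I" for s
    using x[OF that] unfolding abs_less_iff by auto
  show "continuous_on I (\<lambda>s. artanh ((s + c) / a))"
    using x' a by (intro continuous_intros) auto
  show "continuous_on UNIV (\<lambda>t. a * sinh t / cosh t - c)"
    by (intro continuous_intros) auto
  fix s assume s: "s \<in> I"
  have tu: "tanh (artanh ((s + c) / a)) = (s + c) / a" using x[OF s] by (simp add: tanh_artanh_real)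
  then have "sinh (artanh ((s + c) / a)) / cosh (artanh ((s + c) / a)) = (s + c) / a" by (simp add: tanh_def)
  then show "artanh ((s + c) / a) \<in> UNIV \<and> a * sinh (artanh ((s + c) / a)) / cosh (artanh ((s + c) / a)) - c = s"
    using a by (simp add: field_simps) 
next
  fix t :: real
  have "(a * sinh t / cosh t - c + c) / a = tanh t" using a by (simp add: tanh_def field_simps)
  then show "artanh ((a * sinh t / cosh t - c + c) / a) = t" by (simp add: artanh_tanh_real)
next
  fix t :: real
  have p: "(cosh t)^2 - (sinh t)^2 = 1" by (rule hyperbolic_pythagoras)
  have d: "((\<lambda>t. a * sinh t / cosh t) has_real_derivative (a * cosh t * cosh t - sinh t * (a * sinh t)) / (cosh t ^ Suc (Suc 0))) (at t)"
    by (rule DERIV_quotient) (auto intro!: derivative_eq_intros)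
  have "(a * cosh t * cosh t - sinh t * (a * sinh t)) / (cosh t ^ Suc (Suc 0)) = a / (cosh t)^2"
    using p by (simp add: power2_eq_square algebra_simps)
  with DERIV_diff[OF d DERIV_const[of c]]
  have "((\<lambda>t. a * sinh t / cosh t - c) has_real_derivative a / (cosh t)^2) (at t)"
    by simp
  then show "((\<lambda>t. a * sinh t / cosh t - c) has_real_derivative a / (cosh t)^2) (at t) \<and> a / (cosh t)^2 \<noteq> 0"
    using a by simp
qed



lemma dq1: "sinh t \<noteq> 0 \<Longrightarrow> ((\<lambda>t. k * cosh t / sinh t) has_real_derivative - k / (sinh t)^2) (at t)"
proof -
  assume st: "sinh t \<noteq> 0"
  have p: "(cosh t)^2 - (sinh t)^2 = 1" by (rule hyperbolic_pythagoras)
  have d: "((\<lambda>t. k * cosh t / sinh t) has_real_derivative (k * sinh t * sinh t - cosh t * (k * cosh t)) / (sinh t ^ Suc (Suc 0))) (at t)"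
    using st by (auto intro!: DERIV_quotient derivative_eq_intros)
  have "(k * sinh t * sinh t - cosh t * (k * cosh t)) / (sinh t ^ Suc (Suc 0)) = - k / (sinh t)^2"
    using p by (simp add: power2_eq_square algebra_simps; algebra)
  with d show ?thesis by simp
qed

lemma dq2: "((\<lambda>t. k * sinh t / cosh t) has_real_derivative k / (cosh t)^2) (at t)"
proof -
  have p: "(cosh t)^2 - (sinh t)^2 = 1" by (rule hyperbolic_pythagoras)
  have d: "((\<lambda>t. k * sinh t / cosh t) has_real_derivative (k * cosh t * cosh t - sinh t * (k * sinh t)) / (cosh t ^ Suc (Suc 0))) (at t)"
    by (rule DERIV_quotient) (auto intro!: derivative_eq_intros)
  have "(k * cosh t * cosh t - sinh t * (k * sinh t)) / (cosh t ^ Suc (Suc 0)) = k / (cosh t)^2"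
    using p by (simp add: power2_eq_square algebra_simps; algebra)
  with d show ?thesis by simp
qed

lemma dq3: "sinh t \<noteq> 0 \<Longrightarrow> ((\<lambda>t. a / sinh t) has_real_derivative - a * cosh t / (sinh t)^2) (at t)"
  by (auto intro!: derivative_eq_intros simp: power2_eq_square)

lemma dq4: "((\<lambda>t. a / cosh t) has_real_derivative - a * sinh t / (cosh t)^2) (at t)"
  by (auto intro!: derivative_eq_intros simp: power2_eq_square)

lemma dq5: "a \<noteq> 0 \<Longrightarrow> ((\<lambda>t. sinh t / a) has_real_derivative cosh t / a) (at t)"
  by (auto intro!: derivative_eq_intros)
lemma dq6: "a \<noteq> 0 \<Longrightarrow> ((\<lambda>t. cosh t / a) has_real_derivative sinh t / a) (at t)"
  by (auto intro!: derivative_eq_intros)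

lemma hp: "(cosh (t::real))^2 - (sinh t)^2 = 1" by (rule hyperbolic_pythagoras)

lemma us2_1: fixes a t c :: real assumes "a > 0" "sinh t \<noteq> 0"
  shows "(cosh t / a)^2 * (1 * (a * cosh t / sinh t - c + c)^2 + - (a^2)) + 2 * (sinh t / a) * (cosh t / a) * (- a / (sinh t)^2) * (1 * (a * cosh t / sinh t - c + c)) + (sinh t / a)^2 * (- a / (sinh t)^2)^2 * 1 = -1"
  using assms by (simp add: field_simps; use hp[of t] in algebra)

lemma us2_2: fixes a t c :: real assumes "a > 0" "sinh t \<noteq> 0"
  shows "(sinh t / a)^2 * (1 * (a * cosh t / sinh t - c + c)^2 + - (a^2)) = 1"
  using assms by (simp add: field_simps; use hp[of t] in algebra)


lemma us3_1: fixes a t c :: real assumes "a > 0" "sinh t \<noteq> 0"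
  shows "(cosh t / a)^2 * (-1 * (a * cosh t / sinh t - c + c)^2 + a^2) + 2 * (sinh t / a) * (cosh t / a) * (- a / (sinh t)^2) * (-1 * (a * cosh t / sinh t - c + c)) + (sinh t / a)^2 * (- a / (sinh t)^2)^2 * -1 = 1"
  using assms by (simp add: field_simps; use hp[of t] in algebra)

lemma us3_2: fixes a t c :: real assumes "a > 0" "sinh t \<noteq> 0"
  shows "(sinh t / a)^2 * (-1 * (a * cosh t / sinh t - c + c)^2 + a^2) = -1"
  using assms by (simp add: field_simps; use hp[of t] in algebra)


lemma us4_1: fixes a t c :: real assumes "a > 0"
  shows "(sinh t / a)^2 * (1 * (a * sinh t / cosh t - c + c)^2 + - (a^2)) + 2 * (cosh t / a) * (sinh t / a) * (a / (cosh t)^2) * (1 * (a * sinh t / cosh t - c + c)) + (cosh t / a)^2 * (a / (cosh t)^2)^2 * 1 = 1"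
  using assms by (simp add: field_simps; use hp[of t] in algebra)

lemma us4_2: fixes a t c :: real assumes "a > 0"
  shows "(cosh t / a)^2 * (1 * (a * sinh t / cosh t - c + c)^2 + - (a^2)) = -1"
  using assms by (simp add: field_simps; use hp[of t] in algebra)


lemma us5_1: fixes a t c :: real assumes "a > 0"
  shows "(sinh t / a)^2 * (-1 * (a * sinh t / cosh t - c + c)^2 + a^2) + 2 * (cosh t / a) * (sinh t / a) * (a / (cosh t)^2) * (-1 * (a * sinh t / cosh t - c + c)) + (cosh t / a)^2 * (a / (cosh t)^2)^2 * -1 = -1"
  using assms by (simp add: field_simps; use hp[of t] in algebra)

lemma us5_2: fixes a t c :: real assumes "a > 0"
  shows "(cosh t / a)^2 * (-1 * (a * sinh t / cosh t - c + c)^2 + a^2) = 1"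
  using assms by (simp add: field_simps; use hp[of t] in algebra)


lemma rv2_1: fixes a t :: real assumes "a > 0" "sinh t \<noteq> 0"
  shows "1 * (a / (sinh t)^2)^2 = (- a * cosh t / (sinh t)^2)^2 * 1 + (a / sinh t)^2 * -1"
  using assms by (simp add: field_simps; use hp[of t] in algebra)

lemma rv2_2: fixes a t :: real assumes "a > 0" "sinh t \<noteq> 0"
  shows "a / sinh t * (- a * cosh t / (sinh t)^2) * 1 = - a * cosh t / sinh t * (a / (sinh t)^2)"
  using assms by (simp add: field_simps; use hp[of t] in algebra)

lemma rv2_3: fixes a t :: real assumes "a > 0" "sinh t \<noteq> 0"
  shows "(a / sinh t)^2 * 1 - 1 * (- a * cosh t / sinh t)^2 = - (a^2)"
  using assms by (simp add: field_simps; use hp[of t] in algebra)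


lemma rv3_1: fixes a t :: real assumes "a > 0" "sinh t \<noteq> 0"
  shows "-1 * (a / (sinh t)^2)^2 = (- a * cosh t / (sinh t)^2)^2 * -1 + (a / sinh t)^2 * 1"
  using assms by (simp add: field_simps; use hp[of t] in algebra)

lemma rv3_2: fixes a t :: real assumes "a > 0" "sinh t \<noteq> 0"
  shows "a / sinh t * (- a * cosh t / (sinh t)^2) * -1 = a * cosh t / sinh t * (a / (sinh t)^2)"
  using assms by (simp add: field_simps; use hp[of t] in algebra)

lemma rv3_3: fixes a t :: real assumes "a > 0" "sinh t \<noteq> 0"
  shows "(a / sinh t)^2 * -1 - -1 * (a * cosh t / sinh t)^2 = a^2"
  using assms by (simp add: field_simps; use hp[of t] in algebra)


lemma rv4_1: fixes a t :: real assumes "a > 0"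
  shows "1 * (a / (cosh t)^2)^2 = (- a * sinh t / (cosh t)^2)^2 * -1 + (a / cosh t)^2 * 1"
  using assms by (simp add: field_simps; use hp[of t] in algebra)

lemma rv4_2: fixes a t :: real assumes "a > 0"
  shows "a / cosh t * (- a * sinh t / (cosh t)^2) * -1 = a * sinh t / cosh t * (a / (cosh t)^2)"
  using assms by (simp add: field_simps; use hp[of t] in algebra)

lemma rv4_3: fixes a t :: real assumes "a > 0"
  shows "(a / cosh t)^2 * -1 - 1 * (a * sinh t / cosh t)^2 = - (a^2)"
  using assms by (simp add: field_simps; use hp[of t] in algebra)


lemma rv5_1: fixes a t :: real assumes "a > 0"
  shows "-1 * (a / (cosh t)^2)^2 = (- a * sinh t / (cosh t)^2)^2 * 1 + (a / cosh t)^2 * -1"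
  using assms by (simp add: field_simps; use hp[of t] in algebra)

lemma rv5_2: fixes a t :: real assumes "a > 0"
  shows "a / cosh t * (- a * sinh t / (cosh t)^2) * 1 = - a * sinh t / cosh t * (a / (cosh t)^2)"
  using assms by (simp add: field_simps; use hp[of t] in algebra)

lemma rv5_3: fixes a t :: real assumes "a > 0"
  shows "(a / cosh t)^2 * 1 - -1 * (- a * sinh t / cosh t)^2 = a^2"
  using assms by (simp add: field_simps; use hp[of t] in algebra)




lemma vel_T: assumes "frm \<alpha> I T N1 N2 \<kappa>" "s \<in> I"
  shows "\<alpha> differentiable (at s) \<and> vel \<alpha> s = T s"
proof -
  have d: "(\<alpha> has_vector_derivative T s) (at s)" using Fs_of[OF assms] by blast
  then show ?thesis unfolding vel_def using differentiableI_vector vector_derivative_at by blast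
qed

lemma case2:
  assumes I: "open_interval I" and F: "frm \<alpha> I T N1 N2 \<kappa>"
  shows "((spacelike_curve \<alpha> I \<and> rectifying_curve \<alpha> I T N2 \<and> (\<forall>s\<in>I. timelike_plane (T s) (N2 s))
        \<and> (\<forall>s\<in>I. mink (\<alpha> s) (\<alpha> s) > 0))
      \<longleftrightarrow> (\<exists>J \<phi> a y. reparam \<phi> J I \<and> a > 0 \<and> unit_speed_timelike y J \<and>
             (\<forall>t\<in>J. y t \<in> pseudosphere \<and> sinh t \<noteq> 0 \<and> \<alpha> (\<phi> t) = (a / sinh t) *\<^sub>R y t)))"
proof
  assume L: "spacelike_curve \<alpha> I \<and> rectifying_curve \<alpha> I T N2 \<and> (\<forall>s\<in>I. timelike_plane (T s) (N2 s))
        \<and> (\<forall>s\<in>I. mink (\<alpha> s) (\<alpha> s) > 0)"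
  then obtain lam mu where R: "\<forall>s\<in>I. \<alpha> s = lam s *\<^sub>R T s + mu s *\<^sub>R N2 s"
    unfolding rectifying_curve_def by blast
  have eT: "\<forall>s\<in>I. mink (T s) (T s) = 1" and fN: "\<forall>s\<in>I. mink (N2 s) (N2 s) = -1"
  proof (safe)
    fix s assume s: "s \<in> I"
    have sp: "timelike_plane (T s) (N2 s)" "mink (vel \<alpha> s) (vel \<alpha> s) > 0"
      using L s unfolding spacelike_curve_def by auto
    have fs: "\<bar>mink (T s) (T s)\<bar> = 1" "\<bar>mink (N2 s) (N2 s)\<bar> = 1" "mink (T s) (N2 s) = 0"
      using Fs_of[OF F s] by auto
    have "vel \<alpha> s = T s" using vel_T[OF F s] by blast
    with sp fs show "mink (T s) (T s) = 1" by auto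
    with sp fs show "mink (N2 s) (N2 s) = -1" unfolding timelike_plane_def by auto
  qed
  obtain c K where K: "K * -1 > 0" and GH: "\<forall>s\<in>I. mink (\<alpha> s) (T s) = 1 * (s + c) \<and>
           mink (\<alpha> s) (\<alpha> s) = 1 * (s + c)^2 + K"
    using fwd_core[OF I F R eT fN] by auto
  define a where "a = sqrt (- K)"
  have a: "a > 0" "K = - (a^2)" using K by (auto simp: a_def)
  note GH' = GH[unfolded a(2)]
  have Hp: "(s + c)^2 > a^2" if "s \<in> I" for s using L GH' that by force
  note Pa = coth_param[OF a(1) Hp]
  have "\<exists>J. reparam (\<lambda>t. a * cosh t / sinh t - c) J I \<and> (\<forall>t\<in>J. t \<in> - {0} \<and> (\<lambda>t. (sinh t / a) *\<^sub>R \<alpha> (a * cosh t / sinh t - c)) differentiable (at t) \<and>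
           mink (vel (\<lambda>t. (sinh t / a) *\<^sub>R \<alpha> (a * cosh t / sinh t - c)) t) (vel (\<lambda>t. (sinh t / a) *\<^sub>R \<alpha> (a * cosh t / sinh t - c)) t) = -1 \<and>
           mink ((sinh t / a) *\<^sub>R \<alpha> (a * cosh t / sinh t - c)) ((sinh t / a) *\<^sub>R \<alpha> (a * cosh t / sinh t - c)) = 1)"
  proof (rule fwd_case[OF I F eT GH' _ Pa(1) Pa(2) Pa(3) Pa(4) Pa(5)])
    show "open (- {0::real})" by auto
  next
    fix t :: real assume t: "t \<in> - {0}"
    show "((\<lambda>t. sinh t / a) has_real_derivative cosh t / a) (at t)" using dq5 a by auto
  next
    fix t :: real assume t: "t \<in> - {0}"
    then have st: "sinh t \<noteq> 0" by simp
    show "(cosh t / a)^2 * (1 * (a * cosh t / sinh t - c + c)^2 + - (a^2)) + 2 * (sinh t / a) * (cosh t / a) * (- a / (sinh t)^2) * (1 * (a * cosh t / sinh t - c + c))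
               + (sinh t / a)^2 * (- a / (sinh t)^2)^2 * 1 = -1"
      using us2_1[OF a(1) st] by simp
    show "(sinh t / a)^2 * (1 * (a * cosh t / sinh t - c + c)^2 + - (a^2)) = 1"
      using us2_2[OF a(1) st] by simp
  qed
  then obtain J where J: "reparam (\<lambda>t. a * cosh t / sinh t - c) J I" and J2: "\<forall>t\<in>J. t \<in> - {0} \<and> (\<lambda>t. (sinh t / a) *\<^sub>R \<alpha> (a * cosh t / sinh t - c)) differentiable (at t) \<and>
           mink (vel (\<lambda>t. (sinh t / a) *\<^sub>R \<alpha> (a * cosh t / sinh t - c)) t) (vel (\<lambda>t. (sinh t / a) *\<^sub>R \<alpha> (a * cosh t / sinh t - c)) t) = -1 \<and>
           mink ((sinh t / a) *\<^sub>R \<alpha> (a * cosh t / sinh t - c)) ((sinh t / a) *\<^sub>R \<alpha> (a * cosh t / sinh t - c)) = 1" by blast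
  show "\<exists>J \<phi> a y. reparam \<phi> J I \<and> a > 0 \<and> unit_speed_timelike y J \<and>
             (\<forall>t\<in>J. y t \<in> pseudosphere \<and> sinh t \<noteq> 0 \<and> \<alpha> (\<phi> t) = (a / sinh t) *\<^sub>R y t)"
  proof (intro exI conjI ballI)
    show "reparam (\<lambda>t. a * cosh t / sinh t - c) J I" by (rule J)
    show "a > 0" by (rule a)
    show "unit_speed_timelike (\<lambda>t. (sinh t / a) *\<^sub>R \<alpha> (a * cosh t / sinh t - c)) J"
      unfolding unit_speed_timelike_def using J2 by blast
    fix t assume t: "t \<in> J"
    have ct: "sinh t \<noteq> 0" using J2 t by force
    show "(sinh t / a) *\<^sub>R \<alpha> (a * cosh t / sinh t - c) \<in> pseudosphere" using J2 t by (simp add: pseudosphere_def)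
    show "sinh t \<noteq> 0" by (rule ct)
    show "\<alpha> (a * cosh t / sinh t - c) = (a / sinh t) *\<^sub>R (sinh t / a) *\<^sub>R \<alpha> (a * cosh t / sinh t - c)"
      using ct a by simp
  qed
next
  assume "\<exists>J \<phi> a y. reparam \<phi> J I \<and> a > 0 \<and> unit_speed_timelike y J \<and>
             (\<forall>t\<in>J. y t \<in> pseudosphere \<and> sinh t \<noteq> 0 \<and> \<alpha> (\<phi> t) = (a / sinh t) *\<^sub>R y t)"
  then obtain J \<phi> a y where RP: "reparam \<phi> J I" and a: "a > 0" and us: "unit_speed_timelike y J"
    and Y: "\<forall>t\<in>J. y t \<in> pseudosphere \<and> sinh t \<noteq> 0 \<and> \<alpha> (\<phi> t) = (a / sinh t) *\<^sub>R y t" by blast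
  have "rectifying_curve \<alpha> I T N2 \<and> (\<forall>s\<in>I. mink (T s) (T s) = 1 \<and> mink (N2 s) (N2 s) * (- (a^2)) > 0
            \<and> 1 * mink (\<alpha> s) (\<alpha> s) > 0)"
  proof (rule rev_core[OF I F RP, where g="\<lambda>t. a / sinh t" and y=y and ey=1 and ev="-1"
        and gd="\<lambda>t. - a * cosh t / (sinh t)^2" and P="\<lambda>t. a / (sinh t)^2" and Gf="\<lambda>t. - a * cosh t / sinh t"])
    fix t assume t: "t \<in> J"
    have st: "sinh t \<noteq> 0" using Y t by blast
    show "\<alpha> (\<phi> t) = (a / sinh t) *\<^sub>R y t" using Y t by blast
    show "y differentiable (at t) \<and> mink (y t) (y t) = 1 \<and> mink (vel y t) (vel y t) = -1"
      using us Y t unfolding unit_speed_timelike_def pseudosphere_def by auto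
    show "((\<lambda>t. a / sinh t) has_real_derivative - a * cosh t / (sinh t)^2) (at t) \<and> a / sinh t \<noteq> 0"
      using dq3[OF st] st a by simp
    show "a / (sinh t)^2 > 0 \<and> 1 * (a / (sinh t)^2)^2 = (- a * cosh t / (sinh t)^2)^2 * 1 + (a / sinh t)^2 * -1 \<and>
          a / sinh t * (- a * cosh t / (sinh t)^2) * 1 = - a * cosh t / sinh t * (a / (sinh t)^2) \<and>
          ((\<lambda>t. - a * cosh t / sinh t) has_real_derivative 1 * (a / (sinh t)^2)) (at t) \<and>
          (a / sinh t)^2 * 1 - 1 * (- a * cosh t / sinh t)^2 = - (a^2)"
    proof (intro conjI)
      show "a / (sinh t)^2 > 0" using a st by simp
      show "1 * (a / (sinh t)^2)^2 = (- a * cosh t / (sinh t)^2)^2 * 1 + (a / sinh t)^2 * -1"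
        using rv2_1[OF a st] .
      show "a / sinh t * (- a * cosh t / (sinh t)^2) * 1 = - a * cosh t / sinh t * (a / (sinh t)^2)"
        using rv2_2[OF a st] .
      show "((\<lambda>t. - a * cosh t / sinh t) has_real_derivative 1 * (a / (sinh t)^2)) (at t)"
        using dq1[OF st, of "-a"] by simp
      show "(a / sinh t)^2 * 1 - 1 * (- a * cosh t / sinh t)^2 = - (a^2)"
        using rv2_3[OF a st] .
    qed
  qed (use a in auto)
  then have R: "rectifying_curve \<alpha> I T N2" and R2: "\<forall>s\<in>I. mink (T s) (T s) = 1 \<and> mink (N2 s) (N2 s) * (- (a^2)) > 0
            \<and> 1 * mink (\<alpha> s) (\<alpha> s) > 0" by auto
  show "spacelike_curve \<alpha> I \<and> rectifying_curve \<alpha> I T N2 \<and> (\<forall>s\<in>I. timelike_plane (T s) (N2 s))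
        \<and> (\<forall>s\<in>I. mink (\<alpha> s) (\<alpha> s) > 0)"
  proof (intro conjI ballI R)
    show "spacelike_curve \<alpha> I" unfolding spacelike_curve_def using vel_T[OF F] R2 by auto
    fix s assume s: "s \<in> I"
    have "mink (T s) (T s) = 1" "mink (N2 s) (N2 s) < 0" using R2 s a by (auto simp: mult_less_0_iff zero_less_mult_iff)
    moreover have "mink (T s) (N2 s) = 0" using Fs_of[OF F s] by blast
    ultimately show "timelike_plane (T s) (N2 s)" unfolding timelike_plane_def by simp
    show "mink (\<alpha> s) (\<alpha> s) > 0" using R2 s by auto
  qed
qed

lemma case3:
  assumes I: "open_interval I" and F: "frm \<alpha> I T N1 N2 \<kappa>"
  shows "((timelike_curve \<alpha> I \<and> rectifying_curve \<alpha> I T N2 \<and> (\<forall>s\<in>I. timelike_plane (T s) (N2 s))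
        \<and> (\<forall>s\<in>I. mink (\<alpha> s) (\<alpha> s) < 0))
      \<longleftrightarrow> (\<exists>J \<phi> a y. reparam \<phi> J I \<and> a > 0 \<and> unit_speed_spacelike y J \<and>
             (\<forall>t\<in>J. y t \<in> pseudohyperbolic \<and> sinh t \<noteq> 0 \<and> \<alpha> (\<phi> t) = (a / sinh t) *\<^sub>R y t)))"
proof
  assume L: "timelike_curve \<alpha> I \<and> rectifying_curve \<alpha> I T N2 \<and> (\<forall>s\<in>I. timelike_plane (T s) (N2 s))
        \<and> (\<forall>s\<in>I. mink (\<alpha> s) (\<alpha> s) < 0)"
  then obtain lam mu where R: "\<forall>s\<in>I. \<alpha> s = lam s *\<^sub>R T s + mu s *\<^sub>R N2 s"
    unfolding rectifying_curve_def by blast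
  have eT: "\<forall>s\<in>I. mink (T s) (T s) = -1" and fN: "\<forall>s\<in>I. mink (N2 s) (N2 s) = 1"
  proof (safe)
    fix s assume s: "s \<in> I"
    have sp: "timelike_plane (T s) (N2 s)" "mink (vel \<alpha> s) (vel \<alpha> s) < 0"
      using L s unfolding timelike_curve_def by auto
    have fs: "\<bar>mink (T s) (T s)\<bar> = 1" "\<bar>mink (N2 s) (N2 s)\<bar> = 1" "mink (T s) (N2 s) = 0"
      using Fs_of[OF F s] by auto
    have "vel \<alpha> s = T s" using vel_T[OF F s] by blast
    with sp fs show "mink (T s) (T s) = -1" by auto
    with sp fs show "mink (N2 s) (N2 s) = 1" unfolding timelike_plane_def by auto
  qed
  obtain c K where K: "K * 1 > 0" and GH: "\<forall>s\<in>I. mink (\<alpha> s) (T s) = -1 * (s + c) \<and>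
           mink (\<alpha> s) (\<alpha> s) = -1 * (s + c)^2 + K"
    using fwd_core[OF I F R eT fN] by auto
  define a where "a = sqrt K"
  have a: "a > 0" "K = a^2" using K by (auto simp: a_def)
  note GH' = GH[unfolded a(2)]
  have Hp: "(s + c)^2 > a^2" if "s \<in> I" for s using L GH' that by force
  note Pa = coth_param[OF a(1) Hp]
  have "\<exists>J. reparam (\<lambda>t. a * cosh t / sinh t - c) J I \<and> (\<forall>t\<in>J. t \<in> - {0} \<and> (\<lambda>t. (sinh t / a) *\<^sub>R \<alpha> (a * cosh t / sinh t - c)) differentiable (at t) \<and>
           mink (vel (\<lambda>t. (sinh t / a) *\<^sub>R \<alpha> (a * cosh t / sinh t - c)) t) (vel (\<lambda>t. (sinh t / a) *\<^sub>R \<alpha> (a * cosh t / sinh t - c)) t) = 1 \<and>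
           mink ((sinh t / a) *\<^sub>R \<alpha> (a * cosh t / sinh t - c)) ((sinh t / a) *\<^sub>R \<alpha> (a * cosh t / sinh t - c)) = -1)"
  proof (rule fwd_case[OF I F eT GH' _ Pa(1) Pa(2) Pa(3) Pa(4) Pa(5)])
    show "open (- {0::real})" by auto
  next
    fix t :: real assume t: "t \<in> - {0}"
    show "((\<lambda>t. sinh t / a) has_real_derivative cosh t / a) (at t)" using dq5 a by auto
  next
    fix t :: real assume t: "t \<in> - {0}"
    then have st: "sinh t \<noteq> 0" by simp
    show "(cosh t / a)^2 * (-1 * (a * cosh t / sinh t - c + c)^2 + a^2) + 2 * (sinh t / a) * (cosh t / a) * (- a / (sinh t)^2) * (-1 * (a * cosh t / sinh t - c + c))
               + (sinh t / a)^2 * (- a / (sinh t)^2)^2 * -1 = 1"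
      using us3_1[OF a(1) st] by simp
    show "(sinh t / a)^2 * (-1 * (a * cosh t / sinh t - c + c)^2 + a^2) = -1"
      using us3_2[OF a(1) st] by simp
  qed
  then obtain J where J: "reparam (\<lambda>t. a * cosh t / sinh t - c) J I" and J2: "\<forall>t\<in>J. t \<in> - {0} \<and> (\<lambda>t. (sinh t / a) *\<^sub>R \<alpha> (a * cosh t / sinh t - c)) differentiable (at t) \<and>
           mink (vel (\<lambda>t. (sinh t / a) *\<^sub>R \<alpha> (a * cosh t / sinh t - c)) t) (vel (\<lambda>t. (sinh t / a) *\<^sub>R \<alpha> (a * cosh t / sinh t - c)) t) = 1 \<and>
           mink ((sinh t / a) *\<^sub>R \<alpha> (a * cosh t / sinh t - c)) ((sinh t / a) *\<^sub>R \<alpha> (a * cosh t / sinh t - c)) = -1" by blast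
  show "\<exists>J \<phi> a y. reparam \<phi> J I \<and> a > 0 \<and> unit_speed_spacelike y J \<and>
             (\<forall>t\<in>J. y t \<in> pseudohyperbolic \<and> sinh t \<noteq> 0 \<and> \<alpha> (\<phi> t) = (a / sinh t) *\<^sub>R y t)"
  proof (intro exI conjI ballI)
    show "reparam (\<lambda>t. a * cosh t / sinh t - c) J I" by (rule J)
    show "a > 0" by (rule a)
    show "unit_speed_spacelike (\<lambda>t. (sinh t / a) *\<^sub>R \<alpha> (a * cosh t / sinh t - c)) J"
      unfolding unit_speed_spacelike_def using J2 by blast
    fix t assume t: "t \<in> J"
    have ct: "sinh t \<noteq> 0" using J2 t by force
    show "(sinh t / a) *\<^sub>R \<alpha> (a * cosh t / sinh t - c) \<in> pseudohyperbolic" using J2 t by (simp add: pseudohyperbolic_def)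
    show "sinh t \<noteq> 0" by (rule ct)
    show "\<alpha> (a * cosh t / sinh t - c) = (a / sinh t) *\<^sub>R (sinh t / a) *\<^sub>R \<alpha> (a * cosh t / sinh t - c)"
      using ct a by simp
  qed
next
  assume "\<exists>J \<phi> a y. reparam \<phi> J I \<and> a > 0 \<and> unit_speed_spacelike y J \<and>
             (\<forall>t\<in>J. y t \<in> pseudohyperbolic \<and> sinh t \<noteq> 0 \<and> \<alpha> (\<phi> t) = (a / sinh t) *\<^sub>R y t)"
  then obtain J \<phi> a y where RP: "reparam \<phi> J I" and a: "a > 0" and us: "unit_speed_spacelike y J"
    and Y: "\<forall>t\<in>J. y t \<in> pseudohyperbolic \<and> sinh t \<noteq> 0 \<and> \<alpha> (\<phi> t) = (a / sinh t) *\<^sub>R y t" by blast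
  have "rectifying_curve \<alpha> I T N2 \<and> (\<forall>s\<in>I. mink (T s) (T s) = -1 \<and> mink (N2 s) (N2 s) * (a^2) > 0
            \<and> -1 * mink (\<alpha> s) (\<alpha> s) > 0)"
  proof (rule rev_core[OF I F RP, where g="\<lambda>t. a / sinh t" and y=y and ey="-1" and ev=1
        and gd="\<lambda>t. - a * cosh t / (sinh t)^2" and P="\<lambda>t. a / (sinh t)^2" and Gf="\<lambda>t. a * cosh t / sinh t"])
    fix t assume t: "t \<in> J"
    have st: "sinh t \<noteq> 0" using Y t by blast
    show "\<alpha> (\<phi> t) = (a / sinh t) *\<^sub>R y t" using Y t by blast
    show "y differentiable (at t) \<and> mink (y t) (y t) = -1 \<and> mink (vel y t) (vel y t) = 1"
      using us Y t unfolding unit_speed_spacelike_def pseudohyperbolic_def by auto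
    show "((\<lambda>t. a / sinh t) has_real_derivative - a * cosh t / (sinh t)^2) (at t) \<and> a / sinh t \<noteq> 0"
      using dq3[OF st] st a by simp
    show "a / (sinh t)^2 > 0 \<and> -1 * (a / (sinh t)^2)^2 = (- a * cosh t / (sinh t)^2)^2 * -1 + (a / sinh t)^2 * 1 \<and>
          a / sinh t * (- a * cosh t / (sinh t)^2) * -1 = a * cosh t / sinh t * (a / (sinh t)^2) \<and>
          ((\<lambda>t. a * cosh t / sinh t) has_real_derivative -1 * (a / (sinh t)^2)) (at t) \<and>
          (a / sinh t)^2 * -1 - -1 * (a * cosh t / sinh t)^2 = a^2"
    proof (intro conjI)
      show "a / (sinh t)^2 > 0" using a st by simp
      show "-1 * (a / (sinh t)^2)^2 = (- a * cosh t / (sinh t)^2)^2 * -1 + (a / sinh t)^2 * 1"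
        using rv3_1[OF a st] .
      show "a / sinh t * (- a * cosh t / (sinh t)^2) * -1 = a * cosh t / sinh t * (a / (sinh t)^2)"
        using rv3_2[OF a st] .
      show "((\<lambda>t. a * cosh t / sinh t) has_real_derivative -1 * (a / (sinh t)^2)) (at t)"
        using dq1[OF st, of "a"] by simp
      show "(a / sinh t)^2 * -1 - -1 * (a * cosh t / sinh t)^2 = a^2"
        using rv3_3[OF a st] .
    qed
  qed (use a in auto)
  then have R: "rectifying_curve \<alpha> I T N2" and R2: "\<forall>s\<in>I. mink (T s) (T s) = -1 \<and> mink (N2 s) (N2 s) * (a^2) > 0
            \<and> -1 * mink (\<alpha> s) (\<alpha> s) > 0" by auto
  show "timelike_curve \<alpha> I \<and> rectifying_curve \<alpha> I T N2 \<and> (\<forall>s\<in>I. timelike_plane (T s) (N2 s))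
        \<and> (\<forall>s\<in>I. mink (\<alpha> s) (\<alpha> s) < 0)"
  proof (intro conjI ballI R)
    show "timelike_curve \<alpha> I" unfolding timelike_curve_def using vel_T[OF F] R2 by auto
    fix s assume s: "s \<in> I"
    have "mink (T s) (T s) = -1" "mink (N2 s) (N2 s) > 0" using R2 s a by (auto simp: mult_less_0_iff zero_less_mult_iff)
    moreover have "mink (T s) (N2 s) = 0" using Fs_of[OF F s] by blast
    ultimately show "timelike_plane (T s) (N2 s)" unfolding timelike_plane_def by simp
    show "mink (\<alpha> s) (\<alpha> s) < 0" using R2 s by auto
  qed
qed



lemma case4:
  assumes I: "open_interval I" and F: "frm \<alpha> I T N1 N2 \<kappa>"
  shows "((spacelike_curve \<alpha> I \<and> rectifying_curve \<alpha> I T N2 \<and> (\<forall>s\<in>I. timelike_plane (T s) (N2 s))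
        \<and> (\<forall>s\<in>I. mink (\<alpha> s) (\<alpha> s) < 0))
      \<longleftrightarrow> (\<exists>J \<phi> a y. reparam \<phi> J I \<and> a > 0 \<and> unit_speed_spacelike y J \<and>
             (\<forall>t\<in>J. y t \<in> pseudohyperbolic \<and> \<alpha> (\<phi> t) = (a / cosh t) *\<^sub>R y t)))"
proof
  assume L: "spacelike_curve \<alpha> I \<and> rectifying_curve \<alpha> I T N2 \<and> (\<forall>s\<in>I. timelike_plane (T s) (N2 s))
        \<and> (\<forall>s\<in>I. mink (\<alpha> s) (\<alpha> s) < 0)"
  then obtain lam mu where R: "\<forall>s\<in>I. \<alpha> s = lam s *\<^sub>R T s + mu s *\<^sub>R N2 s"
    unfolding rectifying_curve_def by blast
  have eT: "\<forall>s\<in>I. mink (T s) (T s) = 1" and fN: "\<forall>s\<in>I. mink (N2 s) (N2 s) = -1"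
  proof (safe)
    fix s assume s: "s \<in> I"
    have sp: "timelike_plane (T s) (N2 s)" "mink (vel \<alpha> s) (vel \<alpha> s) > 0"
      using L s unfolding spacelike_curve_def by auto
    have fs: "\<bar>mink (T s) (T s)\<bar> = 1" "\<bar>mink (N2 s) (N2 s)\<bar> = 1" "mink (T s) (N2 s) = 0"
      using Fs_of[OF F s] by auto
    have "vel \<alpha> s = T s" using vel_T[OF F s] by blast
    with sp fs show "mink (T s) (T s) = 1" by auto
    with sp fs show "mink (N2 s) (N2 s) = -1" unfolding timelike_plane_def by auto
  qed
  obtain c K where K: "K * -1 > 0" and GH: "\<forall>s\<in>I. mink (\<alpha> s) (T s) = 1 * (s + c) \<and>
           mink (\<alpha> s) (\<alpha> s) = 1 * (s + c)^2 + K"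
    using fwd_core[OF I F R eT fN] by auto
  define a where "a = sqrt (- K)"
  have a: "a > 0" "K = - (a^2)" using K by (auto simp: a_def)
  note GH' = GH[unfolded a(2)]
  have Hp: "(s + c)^2 < a^2" if "s \<in> I" for s using L GH' that by force
  note Pa = tanh_param[OF a(1) Hp]
  have "\<exists>J. reparam (\<lambda>t. a * sinh t / cosh t - c) J I \<and> (\<forall>t\<in>J. t \<in> UNIV \<and> (\<lambda>t. (cosh t / a) *\<^sub>R \<alpha> (a * sinh t / cosh t - c)) differentiable (at t) \<and>
           mink (vel (\<lambda>t. (cosh t / a) *\<^sub>R \<alpha> (a * sinh t / cosh t - c)) t) (vel (\<lambda>t. (cosh t / a) *\<^sub>R \<alpha> (a * sinh t / cosh t - c)) t) = 1 \<and>
           mink ((cosh t / a) *\<^sub>R \<alpha> (a * sinh t / cosh t - c)) ((cosh t / a) *\<^sub>R \<alpha> (a * sinh t / cosh t - c)) = -1)"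
  proof (rule fwd_case[OF I F eT GH' _ Pa(1) Pa(2) Pa(3) Pa(4) Pa(5)])
    show "open (UNIV :: real set)" by auto
  next
    fix t :: real
    show "((\<lambda>t. cosh t / a) has_real_derivative sinh t / a) (at t)" using dq6 a by auto
  next
    fix t :: real
    show "(sinh t / a)^2 * (1 * (a * sinh t / cosh t - c + c)^2 + - (a^2)) + 2 * (cosh t / a) * (sinh t / a) * (a / (cosh t)^2) * (1 * (a * sinh t / cosh t - c + c))
               + (cosh t / a)^2 * (a / (cosh t)^2)^2 * 1 = 1"
      using us4_1[OF a(1)] by simp
    show "(cosh t / a)^2 * (1 * (a * sinh t / cosh t - c + c)^2 + - (a^2)) = -1"
      using us4_2[OF a(1)] by simp
  qed
  then obtain J where J: "reparam (\<lambda>t. a * sinh t / cosh t - c) J I" and J2: "\<forall>t\<in>J. t \<in> UNIV \<and> (\<lambda>t. (cosh t / a) *\<^sub>R \<alpha> (a * sinh t / cosh t - c)) differentiable (at t) \<and>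
           mink (vel (\<lambda>t. (cosh t / a) *\<^sub>R \<alpha> (a * sinh t / cosh t - c)) t) (vel (\<lambda>t. (cosh t / a) *\<^sub>R \<alpha> (a * sinh t / cosh t - c)) t) = 1 \<and>
           mink ((cosh t / a) *\<^sub>R \<alpha> (a * sinh t / cosh t - c)) ((cosh t / a) *\<^sub>R \<alpha> (a * sinh t / cosh t - c)) = -1" by blast
  show "\<exists>J \<phi> a y. reparam \<phi> J I \<and> a > 0 \<and> unit_speed_spacelike y J \<and>
             (\<forall>t\<in>J. y t \<in> pseudohyperbolic \<and> \<alpha> (\<phi> t) = (a / cosh t) *\<^sub>R y t)"
  proof (intro exI conjI ballI)
    show "reparam (\<lambda>t. a * sinh t / cosh t - c) J I" by (rule J)
    show "a > 0" by (rule a)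
    show "unit_speed_spacelike (\<lambda>t. (cosh t / a) *\<^sub>R \<alpha> (a * sinh t / cosh t - c)) J"
      unfolding unit_speed_spacelike_def using J2 by blast
    fix t assume t: "t \<in> J"
    show "(cosh t / a) *\<^sub>R \<alpha> (a * sinh t / cosh t - c) \<in> pseudohyperbolic" using J2 t by (simp add: pseudohyperbolic_def)
    show "\<alpha> (a * sinh t / cosh t - c) = (a / cosh t) *\<^sub>R (cosh t / a) *\<^sub>R \<alpha> (a * sinh t / cosh t - c)"
      using a by simp
  qed
next
  assume "\<exists>J \<phi> a y. reparam \<phi> J I \<and> a > 0 \<and> unit_speed_spacelike y J \<and>
             (\<forall>t\<in>J. y t \<in> pseudohyperbolic \<and> \<alpha> (\<phi> t) = (a / cosh t) *\<^sub>R y t)"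
  then obtain J \<phi> a y where RP: "reparam \<phi> J I" and a: "a > 0" and us: "unit_speed_spacelike y J"
    and Y: "\<forall>t\<in>J. y t \<in> pseudohyperbolic \<and> \<alpha> (\<phi> t) = (a / cosh t) *\<^sub>R y t" by blast
  have "rectifying_curve \<alpha> I T N2 \<and> (\<forall>s\<in>I. mink (T s) (T s) = 1 \<and> mink (N2 s) (N2 s) * (- (a^2)) > 0
            \<and> -1 * mink (\<alpha> s) (\<alpha> s) > 0)"
  proof (rule rev_core[OF I F RP, where g="\<lambda>t. a / cosh t" and y=y and ey="-1" and ev=1
        and gd="\<lambda>t. - a * sinh t / (cosh t)^2" and P="\<lambda>t. a / (cosh t)^2" and Gf="\<lambda>t. a * sinh t / cosh t"])
    fix t assume t: "t \<in> J"
    show "\<alpha> (\<phi> t) = (a / cosh t) *\<^sub>R y t" using Y t by blast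
    show "y differentiable (at t) \<and> mink (y t) (y t) = -1 \<and> mink (vel y t) (vel y t) = 1"
      using us Y t unfolding unit_speed_spacelike_def pseudohyperbolic_def by auto
    show "((\<lambda>t. a / cosh t) has_real_derivative - a * sinh t / (cosh t)^2) (at t) \<and> a / cosh t \<noteq> 0"
      using dq4 a by simp
    show "a / (cosh t)^2 > 0 \<and> 1 * (a / (cosh t)^2)^2 = (- a * sinh t / (cosh t)^2)^2 * -1 + (a / cosh t)^2 * 1 \<and>
          a / cosh t * (- a * sinh t / (cosh t)^2) * -1 = a * sinh t / cosh t * (a / (cosh t)^2) \<and>
          ((\<lambda>t. a * sinh t / cosh t) has_real_derivative 1 * (a / (cosh t)^2)) (at t) \<and>
          (a / cosh t)^2 * -1 - 1 * (a * sinh t / cosh t)^2 = - (a^2)"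
    proof (intro conjI)
      show "a / (cosh t)^2 > 0" using a by simp
      show "1 * (a / (cosh t)^2)^2 = (- a * sinh t / (cosh t)^2)^2 * -1 + (a / cosh t)^2 * 1"
        using rv4_1[OF a] .
      show "a / cosh t * (- a * sinh t / (cosh t)^2) * -1 = a * sinh t / cosh t * (a / (cosh t)^2)"
        using rv4_2[OF a] .
      show "((\<lambda>t. a * sinh t / cosh t) has_real_derivative 1 * (a / (cosh t)^2)) (at t)"
        using dq2[of a t] by simp
      show "(a / cosh t)^2 * -1 - 1 * (a * sinh t / cosh t)^2 = - (a^2)"
        using rv4_3[OF a] .
    qed
  qed (use a in auto)
  then have R: "rectifying_curve \<alpha> I T N2" and R2: "\<forall>s\<in>I. mink (T s) (T s) = 1 \<and> mink (N2 s) (N2 s) * (- (a^2)) > 0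
            \<and> -1 * mink (\<alpha> s) (\<alpha> s) > 0" by auto
  show "spacelike_curve \<alpha> I \<and> rectifying_curve \<alpha> I T N2 \<and> (\<forall>s\<in>I. timelike_plane (T s) (N2 s))
        \<and> (\<forall>s\<in>I. mink (\<alpha> s) (\<alpha> s) < 0)"
  proof (intro conjI ballI R)
    show "spacelike_curve \<alpha> I" unfolding spacelike_curve_def using vel_T[OF F] R2 by auto
    fix s assume s: "s \<in> I"
    have "mink (T s) (T s) = 1" "mink (N2 s) (N2 s) < 0" using R2 s a by (auto simp: mult_less_0_iff zero_less_mult_iff)
    moreover have "mink (T s) (N2 s) = 0" using Fs_of[OF F s] by blast
    ultimately show "timelike_plane (T s) (N2 s)" unfolding timelike_plane_def by simp
    show "mink (\<alpha> s) (\<alpha> s) < 0" using R2 s by auto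
  qed
qed

lemma case5:
  assumes I: "open_interval I" and F: "frm \<alpha> I T N1 N2 \<kappa>"
  shows "((timelike_curve \<alpha> I \<and> rectifying_curve \<alpha> I T N2 \<and> (\<forall>s\<in>I. timelike_plane (T s) (N2 s))
        \<and> (\<forall>s\<in>I. mink (\<alpha> s) (\<alpha> s) > 0))
      \<longleftrightarrow> (\<exists>J \<phi> a y. reparam \<phi> J I \<and> a > 0 \<and> unit_speed_timelike y J \<and>
             (\<forall>t\<in>J. y t \<in> pseudosphere \<and> \<alpha> (\<phi> t) = (a / cosh t) *\<^sub>R y t)))"
proof
  assume L: "timelike_curve \<alpha> I \<and> rectifying_curve \<alpha> I T N2 \<and> (\<forall>s\<in>I. timelike_plane (T s) (N2 s))
        \<and> (\<forall>s\<in>I. mink (\<alpha> s) (\<alpha> s) > 0)"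
  then obtain lam mu where R: "\<forall>s\<in>I. \<alpha> s = lam s *\<^sub>R T s + mu s *\<^sub>R N2 s"
    unfolding rectifying_curve_def by blast
  have eT: "\<forall>s\<in>I. mink (T s) (T s) = -1" and fN: "\<forall>s\<in>I. mink (N2 s) (N2 s) = 1"
  proof (safe)
    fix s assume s: "s \<in> I"
    have sp: "timelike_plane (T s) (N2 s)" "mink (vel \<alpha> s) (vel \<alpha> s) < 0"
      using L s unfolding timelike_curve_def by auto
    have fs: "\<bar>mink (T s) (T s)\<bar> = 1" "\<bar>mink (N2 s) (N2 s)\<bar> = 1" "mink (T s) (N2 s) = 0"
      using Fs_of[OF F s] by auto
    have "vel \<alpha> s = T s" using vel_T[OF F s] by blast
    with sp fs show "mink (T s) (T s) = -1" by auto
    with sp fs show "mink (N2 s) (N2 s) = 1" unfolding timelike_plane_def by auto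
  qed
  obtain c K where K: "K * 1 > 0" and GH: "\<forall>s\<in>I. mink (\<alpha> s) (T s) = -1 * (s + c) \<and>
           mink (\<alpha> s) (\<alpha> s) = -1 * (s + c)^2 + K"
    using fwd_core[OF I F R eT fN] by auto
  define a where "a = sqrt K"
  have a: "a > 0" "K = a^2" using K by (auto simp: a_def)
  note GH' = GH[unfolded a(2)]
  have Hp: "(s + c)^2 < a^2" if "s \<in> I" for s using L GH' that by force
  note Pa = tanh_param[OF a(1) Hp]
  have "\<exists>J. reparam (\<lambda>t. a * sinh t / cosh t - c) J I \<and> (\<forall>t\<in>J. t \<in> UNIV \<and> (\<lambda>t. (cosh t / a) *\<^sub>R \<alpha> (a * sinh t / cosh t - c)) differentiable (at t) \<and>
           mink (vel (\<lambda>t. (cosh t / a) *\<^sub>R \<alpha> (a * sinh t / cosh t - c)) t) (vel (\<lambda>t. (cosh t / a) *\<^sub>R \<alpha> (a * sinh t / cosh t - c)) t) = -1 \<and>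
           mink ((cosh t / a) *\<^sub>R \<alpha> (a * sinh t / cosh t - c)) ((cosh t / a) *\<^sub>R \<alpha> (a * sinh t / cosh t - c)) = 1)"
  proof (rule fwd_case[OF I F eT GH' _ Pa(1) Pa(2) Pa(3) Pa(4) Pa(5)])
    show "open (UNIV :: real set)" by auto
  next
    fix t :: real
    show "((\<lambda>t. cosh t / a) has_real_derivative sinh t / a) (at t)" using dq6 a by auto
  next
    fix t :: real
    show "(sinh t / a)^2 * (-1 * (a * sinh t / cosh t - c + c)^2 + a^2) + 2 * (cosh t / a) * (sinh t / a) * (a / (cosh t)^2) * (-1 * (a * sinh t / cosh t - c + c))
               + (cosh t / a)^2 * (a / (cosh t)^2)^2 * -1 = -1"
      using us5_1[OF a(1)] by simp
    show "(cosh t / a)^2 * (-1 * (a * sinh t / cosh t - c + c)^2 + a^2) = 1"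
      using us5_2[OF a(1)] by simp
  qed
  then obtain J where J: "reparam (\<lambda>t. a * sinh t / cosh t - c) J I" and J2: "\<forall>t\<in>J. t \<in> UNIV \<and> (\<lambda>t. (cosh t / a) *\<^sub>R \<alpha> (a * sinh t / cosh t - c)) differentiable (at t) \<and>
           mink (vel (\<lambda>t. (cosh t / a) *\<^sub>R \<alpha> (a * sinh t / cosh t - c)) t) (vel (\<lambda>t. (cosh t / a) *\<^sub>R \<alpha> (a * sinh t / cosh t - c)) t) = -1 \<and>
           mink ((cosh t / a) *\<^sub>R \<alpha> (a * sinh t / cosh t - c)) ((cosh t / a) *\<^sub>R \<alpha> (a * sinh t / cosh t - c)) = 1" by blast
  show "\<exists>J \<phi> a y. reparam \<phi> J I \<and> a > 0 \<and> unit_speed_timelike y J \<and>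
             (\<forall>t\<in>J. y t \<in> pseudosphere \<and> \<alpha> (\<phi> t) = (a / cosh t) *\<^sub>R y t)"
  proof (intro exI conjI ballI)
    show "reparam (\<lambda>t. a * sinh t / cosh t - c) J I" by (rule J)
    show "a > 0" by (rule a)
    show "unit_speed_timelike (\<lambda>t. (cosh t / a) *\<^sub>R \<alpha> (a * sinh t / cosh t - c)) J"
      unfolding unit_speed_timelike_def using J2 by blast
    fix t assume t: "t \<in> J"
    show "(cosh t / a) *\<^sub>R \<alpha> (a * sinh t / cosh t - c) \<in> pseudosphere" using J2 t by (simp add: pseudosphere_def)
    show "\<alpha> (a * sinh t / cosh t - c) = (a / cosh t) *\<^sub>R (cosh t / a) *\<^sub>R \<alpha> (a * sinh t / cosh t - c)"
      using a by simp
  qed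
next
  assume "\<exists>J \<phi> a y. reparam \<phi> J I \<and> a > 0 \<and> unit_speed_timelike y J \<and>
             (\<forall>t\<in>J. y t \<in> pseudosphere \<and> \<alpha> (\<phi> t) = (a / cosh t) *\<^sub>R y t)"
  then obtain J \<phi> a y where RP: "reparam \<phi> J I" and a: "a > 0" and us: "unit_speed_timelike y J"
    and Y: "\<forall>t\<in>J. y t \<in> pseudosphere \<and> \<alpha> (\<phi> t) = (a / cosh t) *\<^sub>R y t" by blast
  have "rectifying_curve \<alpha> I T N2 \<and> (\<forall>s\<in>I. mink (T s) (T s) = -1 \<and> mink (N2 s) (N2 s) * (a^2) > 0
            \<and> 1 * mink (\<alpha> s) (\<alpha> s) > 0)"
  proof (rule rev_core[OF I F RP, where g="\<lambda>t. a / cosh t" and y=y and ey=1 and ev="-1"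
        and gd="\<lambda>t. - a * sinh t / (cosh t)^2" and P="\<lambda>t. a / (cosh t)^2" and Gf="\<lambda>t. - a * sinh t / cosh t"])
    fix t assume t: "t \<in> J"
    show "\<alpha> (\<phi> t) = (a / cosh t) *\<^sub>R y t" using Y t by blast
    show "y differentiable (at t) \<and> mink (y t) (y t) = 1 \<and> mink (vel y t) (vel y t) = -1"
      using us Y t unfolding unit_speed_timelike_def pseudosphere_def by auto
    show "((\<lambda>t. a / cosh t) has_real_derivative - a * sinh t / (cosh t)^2) (at t) \<and> a / cosh t \<noteq> 0"
      using dq4 a by simp
    show "a / (cosh t)^2 > 0 \<and> -1 * (a / (cosh t)^2)^2 = (- a * sinh t / (cosh t)^2)^2 * 1 + (a / cosh t)^2 * -1 \<and>
          a / cosh t * (- a * sinh t / (cosh t)^2) * 1 = - a * sinh t / cosh t * (a / (cosh t)^2) \<and>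
          ((\<lambda>t. - a * sinh t / cosh t) has_real_derivative -1 * (a / (cosh t)^2)) (at t) \<and>
          (a / cosh t)^2 * 1 - -1 * (- a * sinh t / cosh t)^2 = a^2"
    proof (intro conjI)
      show "a / (cosh t)^2 > 0" using a by simp
      show "-1 * (a / (cosh t)^2)^2 = (- a * sinh t / (cosh t)^2)^2 * 1 + (a / cosh t)^2 * -1"
        using rv5_1[OF a] .
      show "a / cosh t * (- a * sinh t / (cosh t)^2) * 1 = - a * sinh t / cosh t * (a / (cosh t)^2)"
        using rv5_2[OF a] .
      show "((\<lambda>t. - a * sinh t / cosh t) has_real_derivative -1 * (a / (cosh t)^2)) (at t)"
        using dq2[of "-a" t] by simp
      show "(a / cosh t)^2 * 1 - -1 * (- a * sinh t / cosh t)^2 = a^2"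
        using rv5_3[OF a] .
    qed
  qed (use a in auto)
  then have R: "rectifying_curve \<alpha> I T N2" and R2: "\<forall>s\<in>I. mink (T s) (T s) = -1 \<and> mink (N2 s) (N2 s) * (a^2) > 0
            \<and> 1 * mink (\<alpha> s) (\<alpha> s) > 0" by auto
  show "timelike_curve \<alpha> I \<and> rectifying_curve \<alpha> I T N2 \<and> (\<forall>s\<in>I. timelike_plane (T s) (N2 s))
        \<and> (\<forall>s\<in>I. mink (\<alpha> s) (\<alpha> s) > 0)"
  proof (intro conjI ballI R)
    show "timelike_curve \<alpha> I" unfolding timelike_curve_def using vel_T[OF F] R2 by auto
    fix s assume s: "s \<in> I"
    have "mink (T s) (T s) = -1" "mink (N2 s) (N2 s) > 0" using R2 s a by (auto simp: mult_less_0_iff zero_less_mult_iff)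
    moreover have "mink (T s) (N2 s) = 0" using Fs_of[OF F s] by blast
    ultimately show "timelike_plane (T s) (N2 s)" unfolding timelike_plane_def by simp
    show "mink (\<alpha> s) (\<alpha> s) > 0" using R2 s by auto
  qed
qed


theorem theorem3p4:
  fixes \<alpha> T N1 N2 :: "real \<Rightarrow> real^3" and I :: "real set"
  assumes "open_interval I"
    and "unit_speed \<alpha> I"
    and "nonnull_frenet_frame \<alpha> I T N1 N2"
  shows
   "((rectifying_curve \<alpha> I T N2 \<and> (\<forall>s\<in>I. spacelike_plane (T s) (N2 s)))
      \<longleftrightarrow> (\<exists>J \<phi> a y. reparam \<phi> J I \<and> a > 0 \<and> unit_speed_spacelike y J \<and>
             (\<forall>t\<in>J. y t \<in> pseudosphere \<and> cos t \<noteq> 0 \<and> \<alpha> (\<phi> t) = (a / cos t) *\<^sub>R y t)))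
    \<and>
    ((spacelike_curve \<alpha> I \<and> rectifying_curve \<alpha> I T N2 \<and> (\<forall>s\<in>I. timelike_plane (T s) (N2 s))
        \<and> (\<forall>s\<in>I. mink (\<alpha> s) (\<alpha> s) > 0))
      \<longleftrightarrow> (\<exists>J \<phi> a y. reparam \<phi> J I \<and> a > 0 \<and> unit_speed_timelike y J \<and>
             (\<forall>t\<in>J. y t \<in> pseudosphere \<and> sinh t \<noteq> 0 \<and> \<alpha> (\<phi> t) = (a / sinh t) *\<^sub>R y t)))
    \<and>
    ((timelike_curve \<alpha> I \<and> rectifying_curve \<alpha> I T N2 \<and> (\<forall>s\<in>I. timelike_plane (T s) (N2 s))
        \<and> (\<forall>s\<in>I. mink (\<alpha> s) (\<alpha> s) < 0))
      \<longleftrightarrow> (\<exists>J \<phi> a y. reparam \<phi> J I \<and> a > 0 \<and> unit_speed_spacelike y J \<and>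
             (\<forall>t\<in>J. y t \<in> pseudohyperbolic \<and> sinh t \<noteq> 0 \<and> \<alpha> (\<phi> t) = (a / sinh t) *\<^sub>R y t)))
    \<and>
    ((spacelike_curve \<alpha> I \<and> rectifying_curve \<alpha> I T N2 \<and> (\<forall>s\<in>I. timelike_plane (T s) (N2 s))
        \<and> (\<forall>s\<in>I. mink (\<alpha> s) (\<alpha> s) < 0))
      \<longleftrightarrow> (\<exists>J \<phi> a y. reparam \<phi> J I \<and> a > 0 \<and> unit_speed_spacelike y J \<and>
             (\<forall>t\<in>J. y t \<in> pseudohyperbolic \<and> \<alpha> (\<phi> t) = (a / cosh t) *\<^sub>R y t)))
    \<and>
    ((timelike_curve \<alpha> I \<and> rectifying_curve \<alpha> I T N2 \<and> (\<forall>s\<in>I. timelike_plane (T s) (N2 s))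
        \<and> (\<forall>s\<in>I. mink (\<alpha> s) (\<alpha> s) > 0))
      \<longleftrightarrow> (\<exists>J \<phi> a y. reparam \<phi> J I \<and> a > 0 \<and> unit_speed_timelike y J \<and>
             (\<forall>t\<in>J. y t \<in> pseudosphere \<and> \<alpha> (\<phi> t) = (a / cosh t) *\<^sub>R y t)))"
proof -
  obtain \<kappa> where F: "frm \<alpha> I T N1 N2 \<kappa>"
    using assms(3) unfolding nonnull_frenet_frame_def frm_def by blast
  show ?thesis
    by (intro conjI case1[OF assms(1) F] case2[OF assms(1) F] case3[OF assms(1) F]
        case4[OF assms(1) F] case5[OF assms(1) F])
qed

end
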